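(* Let $(X,b)$ be a weighted graph, let $F=(F_x)_{x\in X}$ be a Hermitian vector bundle over $X$, let $\Phi$ be a connection on $F$, and let $W$ be a self-adjoint bundle endomorphism on $F$. Assume: (1) $(X,b)$ is locally finite; (2) all connected components of $(X,b)$ are infinite; (3) the quadratic form $q_{W_{\min}}$ is nonnegative or the quadratic form $q_{-W_{\max}-2\deg}$ is nonnegative. Then the magnetic Schrödinger operator $\mathcal M=\mathcal M_{b,\Phi,W}\colon\Gamma(X;F)\to\Gamma(X;F)$ is surjective.
   Context: A weighted graph is a pair $(X,b)$ with $X$ countable and $b\colon X\times X\to[0,\infty)$ satisfying $b(x,x)=0$, $b(x,y)=b(y,x)$, and $\deg(x):=\sum_{y}b(x,y)<\infty$ for all $x,y$. Write $x\sim y$ if $b(x,y)>0$; $(X,b)$ is locally finite if each $x$ has finitely many $y$ with $b(x,y)>0$. Connected components are the equivalence classes of the relation "connected by a finite path $x_1\sim x_2\sim\dots\sim x_n$". For $V\colon X\to\mathbb R$, the form $q_V\colon C_c(X)\to\mathbb R$ (finitely supported complex functions) is $q_V(f)=\frac12\sum_{x,y}b(x,y)|f(x)-f(y)|^2+\sum_x|f(x)|^2V(x)$; it is nonnegative if $q_V(f)\ge0$ for all $f\in C_c(X)$. A Hermitian vector bundle is a family $F=(F_x)_{x\in X}$ of finite-dimensional complex inner product spaces; $\Gamma(X;F)=\prod_x F_x$. A connection is a family of unitary maps $\Phi_{xy}\colon F_y\to F_x$ with $\Phi_{yx}=\Phi_{xy}^{-1}$. A self-adjoint bundle endomorphism is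 a family of self-adjoint linear maps $W(x)\colon F_x\to F_x$; $W_{\min}(x)$ and $W_{\max}(x)$ denote the smallest and largest eigenvalues of $W(x)$. For locally finite $(X,b)$, $\mathcal M f(x)=\sum_{y}b(x,y)(f(x)-\Phi_{xy}f(y))+W(x)f(x)$ for $f\in\Gamma(X;F)$. *)

theory Defs
  imports "HOL-Analysis.Analysis" "Jordan_Normal_Form.Schur_Decomposition"
begin

definition weighted_graph :: "('x::countable \<Rightarrow> 'x \<Rightarrow> real) \<Rightarrow> bool" where
  "weighted_graph b \<longleftrightarrow> (\<forall>x y. b x y \<ge> 0) \<and> (\<forall>x. b x x = 0) \<and> (\<forall>x y. b x y = b y x)
     \<and> (\<forall>x. (\<lambda>y. b x y) summable_on UNIV)"

definition deg :: "('x \<Rightarrow> 'x \<Rightarrow> real) \<Rightarrow> 'x \<Rightarrow> real" where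
  "deg b x = (\<Sum>\<^sub>\<infinity>y. b x y)"

definition locally_finite :: "('x \<Rightarrow> 'x \<Rightarrow> real) \<Rightarrow> bool" where
  "locally_finite b \<longleftrightarrow> (\<forall>x. finite {y. b x y > 0})"

definition edges :: "('x \<Rightarrow> 'x \<Rightarrow> real) \<Rightarrow> ('x \<times> 'x) set" where
  "edges b = {(x, y). b x y > 0}"

definition component :: "('x \<Rightarrow> 'x \<Rightarrow> real) \<Rightarrow> 'x \<Rightarrow> 'x set" where
  "component b x = {y. (x, y) \<in> (edges b)\<^sup>*}"

definition qform :: "('x \<Rightarrow> 'x \<Rightarrow> real) \<Rightarrow> ('x \<Rightarrow> real) \<Rightarrow> ('x \<Rightarrow> complex) \<Rightarrow> real" where
  "qform b V f = (\<Sum>\<^sub>\<infinity>(x, y). b x y * (cmod (f x - f y))\<^sup>2) / 2 + (\<Sum>\<^sub>\<infinity>x. (cmod (f x))\<^sup>2 * V x)"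

definition qform_nonneg :: "('x \<Rightarrow> 'x \<Rightarrow> real) \<Rightarrow> ('x \<Rightarrow> real) \<Rightarrow> bool" where
  "qform_nonneg b V \<longleftrightarrow> (\<forall>f. finite {x. f x \<noteq> 0} \<longrightarrow> qform b V f \<ge> 0)"

text \<open>Hermitian bundle: fibre F_x = complex vectors of dimension d x with the standard inner product.
  Sections Gamma(X;F).\<close>
definition sections :: "('x \<Rightarrow> nat) \<Rightarrow> ('x \<Rightarrow> complex vec) set" where
  "sections d = {f. \<forall>x. f x \<in> carrier_vec (d x)}"

definition unitary_map :: "complex mat \<Rightarrow> nat \<Rightarrow> nat \<Rightarrow> bool" where
  "unitary_map U m n \<longleftrightarrow> U \<in> carrier_mat m n \<and> mat_adjoint U * U = 1\<^sub>m n \<and> U * mat_adjoint U = 1\<^sub>m m"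

definition connection :: "('x \<Rightarrow> 'x \<Rightarrow> real) \<Rightarrow> ('x \<Rightarrow> nat) \<Rightarrow> ('x \<Rightarrow> 'x \<Rightarrow> complex mat) \<Rightarrow> bool" where
  "connection b d \<Phi> \<longleftrightarrow> (\<forall>x y. b x y > 0 \<longrightarrow> unitary_map (\<Phi> x y) (d x) (d y)
      \<and> \<Phi> y x * \<Phi> x y = 1\<^sub>m (d y) \<and> \<Phi> x y * \<Phi> y x = 1\<^sub>m (d x))"

definition selfadjoint_endo :: "('x \<Rightarrow> nat) \<Rightarrow> ('x \<Rightarrow> complex mat) \<Rightarrow> bool" where
  "selfadjoint_endo d W \<longleftrightarrow> (\<forall>x. W x \<in> carrier_mat (d x) (d x) \<and> mat_adjoint (W x) = W x)"

definition Wmin :: "('x \<Rightarrow> complex mat) \<Rightarrow> 'x \<Rightarrow> real" where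
  "Wmin W x = Min {l::real. eigenvalue (W x) (complex_of_real l)}"

definition Wmax :: "('x \<Rightarrow> complex mat) \<Rightarrow> 'x \<Rightarrow> real" where
  "Wmax W x = Max {l::real. eigenvalue (W x) (complex_of_real l)}"

text \<open>Magnetic Schroedinger operator (for locally finite graphs).\<close>
definition magnetic_op :: "('x \<Rightarrow> 'x \<Rightarrow> real) \<Rightarrow> ('x \<Rightarrow> nat) \<Rightarrow> ('x \<Rightarrow> 'x \<Rightarrow> complex mat)
    \<Rightarrow> ('x \<Rightarrow> complex mat) \<Rightarrow> ('x \<Rightarrow> complex vec) \<Rightarrow> 'x \<Rightarrow> complex vec" where
  "magnetic_op b d \<Phi> W f x =
     vec (d x) (\<lambda>i. \<Sum>y\<in>{y. b x y > 0}. complex_of_real (b x y) * (f x $ i - (\<Phi> x y *\<^sub>v f y) $ i))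
     + W x *\<^sub>v f x"

end

theory Submission
  imports Defs "HOL-Library.Function_Algebras"
begin



context vector_space begin

lemma indep_card_le_dim:
  assumes "independent I" "I \<subseteq> V" "V \<subseteq> span S" "finite S"
  shows "finite I \<and> card I \<le> dim V"
proof -
  obtain B where B: "B \<subseteq> V" "independent B" "V \<subseteq> span B" "card B = dim V"
    by (rule basis_exists)
  have "finite B" using independent_span_bound[OF assms(4) B(2)] B(1) assms(3) by auto
  then show ?thesis using independent_span_bound[OF \<open>finite B\<close> assms(1)] assms(2) B by auto
qed

lemma dim_mono_sub:
  assumes "U \<subseteq> V" "V \<subseteq> span S" "finite S"
  shows "dim U \<le> dim V"
proof -
  obtain B where B: "B \<subseteq> U" "independent B" "U \<subseteq> span B" "card B = dim U"
    by (rule basis_exists)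
  show ?thesis using indep_card_le_dim[OF B(2) _ assms(2,3)] B assms(1) by auto
qed

lemma dim_eq_sub:
  assumes "subspace U" "U \<subseteq> V" "V \<subseteq> span S" "finite S" "dim U = dim V"
  shows "U = V"
proof (rule ccontr)
  assume "U \<noteq> V"
  then obtain v where v: "v \<in> V" "v \<notin> U" using assms(2) by auto
  obtain B where B: "B \<subseteq> U" "independent B" "U \<subseteq> span B" "card B = dim U"
    by (rule basis_exists)
  have sB: "span B = U" using B assms(1) span_minimal[of B U] by auto
  have fB: "finite B" using indep_card_le_dim[OF B(2) _ assms(3,4)] B(1) assms(2) by auto
  have "independent (insert v B)" using independent_insertI[of v B] v sB B by auto
  moreover have "insert v B \<subseteq> V" using B v assms by auto
  ultimately have "card (insert v B) \<le> dim V" using indep_card_le_dim assms by blast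
  moreover have "card (insert v B) = card B + 1" using fB v B by (metis card_insert_disjoint subsetD Suc_eq_plus1)
  ultimately show False using B assms by auto
qed

lemma inj_surj_sub:
  assumes lin: "Vector_Spaces.linear scale scale T" and "V \<subseteq> span S" "finite S" "subspace V"
    "T ` V \<subseteq> V" "inj_on T V"
  shows "T ` V = V"
proof -
  interpret lt: Vector_Spaces.linear scale scale T by fact
  obtain B where B: "B \<subseteq> V" "independent B" "V \<subseteq> span B" "card B = dim V"
    by (rule basis_exists)
  have sB: "span B = V" using B assms span_minimal[of B V] by auto
  have fB: "finite B" using indep_card_le_dim[OF B(2) _ assms(2,3)] B(1) by auto
  have ind: "independent (T ` B)" using lt.independent_injective_image[OF B(2)] sB assms(6) by auto
  have "span (T ` B) = T ` V" using lt.span_image sB by auto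
  have "card (T ` B) = card B" using card_image[of T B] assms(6) B(1) inj_on_subset by blast
  hence "dim (T ` V) = dim V" using dim_eq_card_independent[OF ind] \<open>span (T ` B) = T ` V\<close> B(4)
    by (metis dim_span)
  moreover have "subspace (T ` V)" using \<open>span (T ` B) = T ` V\<close> by (metis subspace_span)
  ultimately show ?thesis using dim_eq_sub assms by blast
qed

end

definition cscale :: "complex \<Rightarrow> ('p \<Rightarrow> complex) \<Rightarrow> ('p \<Rightarrow> complex)" where
  "cscale c f = (\<lambda>p. c * f p)"

interpretation cv: vector_space "cscale :: complex \<Rightarrow> ('p \<Rightarrow> complex) \<Rightarrow> _"
  by unfold_locales (auto simp: cscale_def fun_eq_iff algebra_simps)


definition nb :: "('p \<Rightarrow> 'p \<Rightarrow> complex) \<Rightarrow> 'p \<Rightarrow> 'p set" where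
  "nb m p = {q. m p q \<noteq> 0}"

definition Lop :: "('p \<Rightarrow> 'p \<Rightarrow> complex) \<Rightarrow> ('p \<Rightarrow> complex) \<Rightarrow> 'p \<Rightarrow> complex" where
  "Lop m f = (\<lambda>p. \<Sum>q\<in>nb m p. m p q * f q)"

lemma Lop_sum: "finite C \<Longrightarrow> nb m p \<subseteq> C \<Longrightarrow> Lop m f p = (\<Sum>q\<in>C. m p q * f q)"
  unfolding Lop_def by (rule sum.mono_neutral_left) (auto simp: nb_def)

lemma Lop_add: "Lop m (f + g) = Lop m f + Lop m g"
  by (simp add: Lop_def fun_eq_iff sum.distrib algebra_simps)

lemma Lop_diff: "Lop m (f - g) = Lop m f - Lop m g"
  by (simp add: Lop_def fun_eq_iff sum_subtractf algebra_simps)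

lemma Lop_scale: "Lop m (cscale c f) = cscale c (Lop m f)"
  by (simp add: Lop_def cscale_def fun_eq_iff sum_distrib_left algebra_simps)

lemma Lop_zero: "Lop m 0 = 0"
  by (simp add: Lop_def fun_eq_iff)

lemma Lop_linear: "Vector_Spaces.linear cscale cscale (Lop m)"
  by unfold_locales (simp_all add: Lop_add Lop_scale)

lemma Lop_local: "(\<And>q. q \<in> nb m p \<Longrightarrow> f q = f' q) \<Longrightarrow> Lop m f p = Lop m f' p"
  unfolding Lop_def by (rule sum.cong) auto


definition VA :: "'p set \<Rightarrow> ('p \<Rightarrow> complex) set" where
  "VA A = {h. \<forall>p. p \<notin> A \<longrightarrow> h p = 0}"

definition delta :: "'p \<Rightarrow> 'p \<Rightarrow> complex" where
  "delta p = (\<lambda>q. if q = p then 1 else 0)"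

lemma sum_fun_apply': "(sum f A) x = (\<Sum>a\<in>A. f a x)"
  by (induction A rule: infinite_finite_induct) auto

lemma VA_span: "finite A \<Longrightarrow> VA A \<subseteq> cv.span (delta ` A)"
proof
  fix h assume "finite A" "h \<in> VA A"
  have "h = (\<Sum>p\<in>A. cscale (h p) (delta p))"
  proof
    fix q
    have "(\<Sum>p\<in>A. cscale (h p) (delta p)) q = (\<Sum>p\<in>A. h p * delta p q)"
      by (simp add: sum_fun_apply' cscale_def)
    also have "\<dots> = (if q \<in> A then h q else 0)"
      using \<open>finite A\<close> by (simp add: delta_def if_distrib cong: if_cong)
    also have "\<dots> = h q" using \<open>h \<in> VA A\<close> by (auto simp: VA_def)
    finally show "h q = (\<Sum>p\<in>A. cscale (h p) (delta p)) q" by simp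
  qed
  also have "\<dots> \<in> cv.span (delta ` A)"
    by (intro cv.span_sum cv.span_scale cv.span_base) auto
  finally show "h \<in> cv.span (delta ` A)" .
qed

lemma VA_subspace: "cv.subspace (VA A)"
  by (auto simp: cv.subspace_def VA_def cscale_def)

lemma VA_mono: "A \<subseteq> B \<Longrightarrow> VA A \<subseteq> VA B"
  by (auto simp: VA_def)

locale hm =
  fixes m :: "'p::countable \<Rightarrow> 'p \<Rightarrow> complex"
  assumes fin: "\<And>p. finite (nb m p)"
    and herm: "\<And>p q. m q p = cnj (m p q)"
    and inj: "\<And>f. finite {p. f p \<noteq> 0} \<Longrightarrow> Lop m f = 0 \<Longrightarrow> f = 0"
begin

lemma nb_sym: "q \<in> nb m p \<longleftrightarrow> p \<in> nb m q"
  using herm[of p q] by (auto simp: nb_def)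

lemma Lop_on: "finite A \<Longrightarrow> h \<in> VA A \<Longrightarrow> Lop m h q = (\<Sum>p\<in>A. m q p * h p)"
proof -
  assume A: "finite A" "h \<in> VA A"
  have "Lop m h q = (\<Sum>p\<in>nb m q \<union> A. m q p * h p)"
    using A fin by (intro Lop_sum) auto
  also have "\<dots> = (\<Sum>p\<in>A. m q p * h p)"
    using A fin by (intro sum.mono_neutral_right) (auto simp: VA_def nb_def)
  finally show ?thesis .
qed

lemma finite_solve:
  assumes A: "finite A"
  shows "\<exists>f. \<forall>p\<in>A. Lop m f p = g p"
proof -
  define T where "T = (\<lambda>h p. if p \<in> A then Lop m (Lop m h) p else 0)"
  define C where "C = (\<Union>p\<in>A. nb m p)"
  have fC: "finite C" using A fin by (auto simp: C_def)
  have T0: "h = 0" if h: "h \<in> VA A" "T h = 0" for h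
  proof -
    define u where "u = Lop m h"
    have uC: "u \<in> VA C"
    proof (unfold VA_def, safe)
      fix q assume "q \<notin> C"
      have "u q = (\<Sum>p\<in>A. m q p * h p)" using Lop_on[OF A h(1)] by (simp add: u_def)
      also have "\<dots> = 0"
      proof (rule sum.neutral, safe)
        fix p assume "p \<in> A"
        then have "q \<notin> nb m p" using \<open>q \<notin> C\<close> by (auto simp: C_def)
        then have "m q p = 0" using nb_sym[of q p] by (auto simp: nb_def)
        then show "m q p * h p = 0" by simp
      qed
      finally show "u q = 0" .
    qed
    have "0 = (\<Sum>p\<in>A. Lop m u p * cnj (h p))"
    proof -
      have "\<forall>p\<in>A. Lop m u p = 0" using h(2) unfolding T_def u_def
        by (metis (mono_tags, lifting) zero_fun_def)
      then show ?thesis by simp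
    qed
    also have "\<dots> = (\<Sum>p\<in>A. \<Sum>q\<in>C. m p q * u q * cnj (h p))"
      by (intro sum.cong refl, subst Lop_sum[OF fC]) (auto simp: C_def sum_distrib_right)
    also have "\<dots> = (\<Sum>q\<in>C. \<Sum>p\<in>A. m p q * u q * cnj (h p))"
      by (rule sum.swap)
    also have "\<dots> = (\<Sum>q\<in>C. u q * cnj (\<Sum>p\<in>A. m q p * h p))"
      by (intro sum.cong refl) (simp add: sum_distrib_left herm[symmetric] algebra_simps)
    also have "\<dots> = (\<Sum>q\<in>C. u q * cnj (u q))"
      using Lop_on[OF A h(1)] by (simp add: u_def)
    also have "\<dots> = complex_of_real (\<Sum>q\<in>C. (cmod (u q))\<^sup>2)"
      by (simp only: of_real_sum complex_norm_square)
    finally have "(\<Sum>q\<in>C. (cmod (u q))\<^sup>2) = 0" by (metis of_real_eq_0_iff)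
    then have "\<forall>q\<in>C. (cmod (u q))\<^sup>2 = 0" using fC
      by (subst (asm) sum_nonneg_eq_0_iff) auto
    then have "u = 0" using uC by (auto simp: VA_def fun_eq_iff)
    moreover have "finite {p. h p \<noteq> 0}"
      using h(1) A by (auto simp: VA_def intro: finite_subset[of _ A])
    ultimately show "h = 0" using inj u_def by auto
  qed
  have Tlin: "Vector_Spaces.linear cscale cscale T"
    by unfold_locales (auto simp: T_def Lop_add Lop_scale[unfolded cscale_def] fun_eq_iff cscale_def)
  have Tdiff: "T (x - y) = T x - T y" for x y
    by (auto simp: T_def Lop_diff fun_eq_iff)
  have "inj_on T (VA A)"
  proof (rule inj_onI)
    fix x y assume "x \<in> VA A" "y \<in> VA A" "T x = T y"
    then have "x - y \<in> VA A" "T (x - y) = 0" using Tdiff by (auto simp: VA_def)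
    then show "x = y" using T0 by (metis eq_iff_diff_eq_0)
  qed
  moreover have "T ` VA A \<subseteq> VA A" by (auto simp: T_def VA_def)
  ultimately have "T ` VA A = VA A"
    using cv.inj_surj_sub[OF Tlin VA_span[OF A] _ VA_subspace] A by auto
  moreover have "(\<lambda>p. if p \<in> A then g p else 0) \<in> VA A" by (auto simp: VA_def)
  ultimately obtain h where "T h = (\<lambda>p. if p \<in> A then g p else 0)" by (metis imageE)
  then have "\<forall>p\<in>A. Lop m (Lop m h) p = g p" unfolding T_def by (metis (full_types))
  then show ?thesis by blast
qed


definition An :: "nat \<Rightarrow> 'p set" where "An n = {p. to_nat p < n}"
definition Bn :: "nat \<Rightarrow> 'p set" where "Bn n = An n \<union> (\<Union>p\<in>An n. nb m p)"
definition rs :: "nat \<Rightarrow> ('p \<Rightarrow> complex) \<Rightarrow> 'p \<Rightarrow> complex" where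
  "rs n f = (\<lambda>p. if p \<in> Bn n then f p else 0)"
definition Sg :: "('p \<Rightarrow> complex) \<Rightarrow> nat \<Rightarrow> ('p \<Rightarrow> complex) set" where
  "Sg g k = {f. \<forall>p\<in>An k. Lop m f p = g p}"
definition Pg :: "('p \<Rightarrow> complex) \<Rightarrow> nat \<Rightarrow> nat \<Rightarrow> ('p \<Rightarrow> complex) set" where
  "Pg g n k = rs n ` Sg g k"

lemma An_finite: "finite (An n)"
proof -
  have "An n = to_nat -` {..<n}" by (auto simp: An_def)
  then show ?thesis by (metis finite_lessThan finite_vimageI inj_to_nat)
qed

lemma Bn_finite: "finite (Bn n)"
  using An_finite fin by (auto simp: Bn_def)

lemma An_mono: "n \<le> k \<Longrightarrow> An n \<subseteq> An k"
  by (auto simp: An_def)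

lemma Bn_mono: "n \<le> k \<Longrightarrow> Bn n \<subseteq> Bn k"
  using An_mono by (auto simp: Bn_def)

lemma An_Bn: "An n \<subseteq> Bn n" by (auto simp: Bn_def)

lemma nb_Bn: "p \<in> An n \<Longrightarrow> nb m p \<subseteq> Bn n" by (auto simp: Bn_def)

lemma Sg_ne: "Sg g k \<noteq> {}"
  using finite_solve[OF An_finite, of k g] by (auto simp: Sg_def)

lemma Sg_mono: "k \<le> k' \<Longrightarrow> Sg g k' \<subseteq> Sg g k"
  using An_mono by (auto simp: Sg_def)

lemma Pg_mono: "k \<le> k' \<Longrightarrow> Pg g n k' \<subseteq> Pg g n k"
  unfolding Pg_def using Sg_mono by (meson image_mono)

lemma U_subspace: "cv.subspace (Pg 0 n k)"
proof -
  have "0 \<in> Sg 0 k" by (simp add: Sg_def Lop_zero)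
  moreover have "rs n 0 = 0" by (simp add: rs_def fun_eq_iff)
  ultimately have z: "0 \<in> Pg 0 n k" unfolding Pg_def by (metis image_eqI)
  have a: "x + y \<in> Pg 0 n k" if xy: "x \<in> Pg 0 n k" "y \<in> Pg 0 n k" for x y
  proof -
    obtain f1 f2 where f: "f1 \<in> Sg 0 k" "f2 \<in> Sg 0 k" "x = rs n f1" "y = rs n f2"
      using xy unfolding Pg_def by blast
    have "f1 + f2 \<in> Sg 0 k" using f by (auto simp: Sg_def Lop_add)
    moreover have "x + y = rs n (f1 + f2)" using f by (auto simp: rs_def fun_eq_iff)
    ultimately show ?thesis unfolding Pg_def by blast
  qed
  have s: "cscale c x \<in> Pg 0 n k" if xy: "x \<in> Pg 0 n k" for x c
  proof -
    obtain f1 where f: "f1 \<in> Sg 0 k" "x = rs n f1"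
      using xy unfolding Pg_def by blast
    have "cscale c f1 \<in> Sg 0 k" using f by (auto simp: Sg_def Lop_scale[unfolded cscale_def] cscale_def)
    moreover have "cscale c x = rs n (cscale c f1)" using f by (auto simp: rs_def fun_eq_iff cscale_def)
    ultimately show ?thesis unfolding Pg_def by blast
  qed
  show ?thesis using z a s unfolding cv.subspace_def by blast
qed

lemma U_span: "Pg 0 n k \<subseteq> cv.span (delta ` Bn n)"
proof -
  have "Pg 0 n k \<subseteq> VA (Bn n)" by (auto simp: Pg_def rs_def VA_def)
  then show ?thesis using VA_span[OF Bn_finite] by blast
qed

lemma Pg_coset:
  assumes "f0 \<in> Sg g k"
  shows "Pg g n k = (\<lambda>u. rs n f0 + u) ` Pg 0 n k"
proof (intro subset_antisym subsetI)
  fix x assume "x \<in> Pg g n k"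
  then obtain f where f: "f \<in> Sg g k" "x = rs n f" unfolding Pg_def by blast
  then have "f - f0 \<in> Sg 0 k" using assms by (auto simp: Sg_def Lop_diff)
  moreover have "x = rs n f0 + rs n (f - f0)" using f by (auto simp: rs_def fun_eq_iff)
  ultimately show "x \<in> (\<lambda>u. rs n f0 + u) ` Pg 0 n k" unfolding Pg_def by blast
next
  fix x assume "x \<in> (\<lambda>u. rs n f0 + u) ` Pg 0 n k"
  then obtain f where f: "f \<in> Sg 0 k" "x = rs n f0 + rs n f" unfolding Pg_def by blast
  then have "f0 + f \<in> Sg g k" using assms by (auto simp: Sg_def Lop_add)
  moreover have "x = rs n (f0 + f)" using f by (auto simp: rs_def fun_eq_iff)
  ultimately show "x \<in> Pg g n k" unfolding Pg_def by blast
qed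

lemma stabilize: "\<exists>M\<ge>n. \<forall>k\<ge>M. Pg g n k = Pg g n M"
proof -
  define d where "d k = cv.dim (Pg 0 n k)" for k
  define M where "M = arg_min d (\<lambda>k. n \<le> k)"
  have Mx: "n \<le> M \<and> (\<forall>k. n \<le> k \<longrightarrow> d M \<le> d k)"
    unfolding M_def by (rule arg_min_nat_lemma[of _ n]) simp
  then have M: "n \<le> M" "\<And>k. n \<le> k \<Longrightarrow> d M \<le> d k" by blast+
  have "Pg g n k = Pg g n M" if "M \<le> k" for k
  proof -
    have sub: "Pg 0 n k \<subseteq> Pg 0 n M" using Pg_mono that by blast
    have "d k \<le> d M" unfolding d_def
      by (rule cv.dim_mono_sub[OF sub U_span finite_imageI[OF Bn_finite]])
    moreover have "d M \<le> d k" using M(1) M(2)[of k] that by linarith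
    ultimately have "Pg 0 n k = Pg 0 n M"
      using cv.dim_eq_sub[OF U_subspace sub U_span finite_imageI[OF Bn_finite]] unfolding d_def by linarith
    moreover obtain f0 where "f0 \<in> Sg g k" using Sg_ne by blast
    moreover then have "f0 \<in> Sg g M" using Sg_mono that by blast
    ultimately show ?thesis using Pg_coset[of f0 g k n] Pg_coset[of f0 g M n] by simp
  qed
  then show ?thesis using M(1) by blast
qed

theorem surj: "\<exists>f. Lop m f = g"
proof -
  define Mn where "Mn n = (SOME M. M \<ge> n \<and> (\<forall>k\<ge>M. Pg g n k = Pg g n M))" for n
  have Mn_ex: "Mn n \<ge> n \<and> (\<forall>k\<ge>Mn n. Pg g n k = Pg g n (Mn n))" for n
    unfolding Mn_def by (rule someI_ex[OF stabilize])
  have Mn: "Mn n \<ge> n" "\<And>k. k \<ge> Mn n \<Longrightarrow> Pg g n k = Pg g n (Mn n)" for n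
    using Mn_ex[of n] by blast+
  define Q where "Q n = Pg g n (Mn n)" for n
  have ext: "\<exists>h'\<in>Q (Suc n). rs n h' = h" if "h \<in> Q n" for n h
  proof -
    define k where "k = max (Mn n) (Mn (Suc n))"
    have "h \<in> Pg g n k" using that Mn(2)[of n k] by (auto simp: Q_def k_def)
    then obtain f where f: "f \<in> Sg g k" "h = rs n f" by (auto simp: Pg_def)
    have "rs (Suc n) f \<in> Q (Suc n)" using f Mn(2)[of "Suc n" k] by (auto simp: Q_def k_def Pg_def)
    moreover have "rs n (rs (Suc n) f) = h" using f Bn_mono[of n "Suc n"]
      by (auto simp: rs_def fun_eq_iff)
    ultimately show ?thesis by blast
  qed
  have Q_ne: "Q n \<noteq> {}" for n using Sg_ne by (auto simp: Q_def Pg_def)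
  define hs where "hs = rec_nat (SOME h. h \<in> Q 0) (\<lambda>n h. SOME h'. h' \<in> Q (Suc n) \<and> rs n h' = h)"
  have hs0: "hs 0 = (SOME h. h \<in> Q 0)" by (simp add: hs_def)
  have hsS: "hs (Suc n) = (SOME h'. h' \<in> Q (Suc n) \<and> rs n h' = hs n)" for n by (simp add: hs_def)
  have h0: "hs 0 \<in> Q 0" unfolding hs0 using Q_ne[of 0] by (simp add: some_in_eq)
  have step: "hs (Suc n) \<in> Q (Suc n) \<and> rs n (hs (Suc n)) = hs n" if "hs n \<in> Q n" for n
  proof -
    have "\<exists>h'. h' \<in> Q (Suc n) \<and> rs n h' = hs n" using ext[OF that] by blast
    from someI_ex[OF this] show ?thesis unfolding hsS[of n] .
  qed
  have hsQ': "hs n \<in> Q n" for n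
  proof (induction n)
    case 0 show ?case by (rule h0)
  next
    case (Suc n) then show ?case using step by blast
  qed
  have hsQ: "hs n \<in> Q n \<and> rs n (hs (Suc n)) = hs n" for n
    using hsQ' step by blast
  have coh: "hs K q = hs n q" if "n \<le> K" "q \<in> Bn n" for n K q
    using that(1)
  proof (induction K rule: dec_induct)
    case (step K)
    have "hs (Suc K) q = rs K (hs (Suc K)) q" using Bn_mono[OF step(1)] that(2) by (auto simp: rs_def)
    then show ?case using hsQ[of K] step by simp
  qed simp
  define f where "f q = hs (Suc (to_nat q)) q" for q
  have "Lop m f p = g p" for p
  proof -
    define n where "n = Suc (to_nat p)"
    have pA: "p \<in> An n" by (auto simp: An_def n_def)
    have "hs n \<in> Pg g n (Mn n)" using hsQ[of n] by (simp add: Q_def)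
    then obtain f' where f': "f' \<in> Sg g (Mn n)" "hs n = rs n f'" by (auto simp: Pg_def)
    have "Lop m f' p = g p" using f' An_mono[OF Mn(1)[of n]] pA by (auto simp: Sg_def)
    moreover have "Lop m f p = Lop m f' p"
    proof (rule Lop_local)
      fix q assume q: "q \<in> nb m p"
      then have qB: "q \<in> Bn n" using nb_Bn[OF pA] by blast
      define K where "K = max n (Suc (to_nat q))"
      have "q \<in> Bn (Suc (to_nat q))" using An_Bn by (auto simp: An_def)
      then have "hs K q = f q" using coh[of "Suc (to_nat q)" K q] by (simp add: K_def f_def)
      moreover have "hs K q = hs n q" using coh[of n K q] qB by (simp add: K_def)
      ultimately show "f q = f' q" using f' qB by (simp add: rs_def)
    qed
    ultimately show ?thesis by simp
  qed
  then show ?thesis by blast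
qed

end





lemma compact_box:
  fixes n :: nat
  shows "compact (PiE UNIV (\<lambda>i::nat. if i < n then cball (0::complex) 1 else {0}))"
proof -
  have "compactin (product_topology (\<lambda>i. euclidean) UNIV)
          (PiE UNIV (\<lambda>i::nat. if i < n then cball (0::complex) 1 else {0}))"
    by (subst compactin_PiE) auto
  then show ?thesis by (simp add: euclidean_product_topology)
qed


lemma coord_cont: "continuous_on S (\<lambda>v::nat \<Rightarrow> complex. v i)"
  by (rule continuous_on_subset[OF continuous_on_product_coordinates]) simp

definition Av :: "nat \<Rightarrow> (nat \<Rightarrow> nat \<Rightarrow> complex) \<Rightarrow> (nat \<Rightarrow> complex) \<Rightarrow> nat \<Rightarrow> complex" where
  "Av n a v i = (\<Sum>j<n. a i j * v j)"
definition Sf :: "nat \<Rightarrow> (nat \<Rightarrow> nat \<Rightarrow> complex) \<Rightarrow> (nat \<Rightarrow> complex) \<Rightarrow> (nat \<Rightarrow> complex) \<Rightarrow> complex" where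
  "Sf n a u v = (\<Sum>i<n. cnj (u i) * Av n a v i)"
definition Nf :: "nat \<Rightarrow> (nat \<Rightarrow> complex) \<Rightarrow> real" where
  "Nf n u = (\<Sum>i<n. (cmod (u i))\<^sup>2)"

lemma Nf_cont: "continuous_on S (Nf n)"
  unfolding Nf_def[abs_def]
  by (intro continuous_on_sum continuous_on_power continuous_on_norm coord_cont)

lemma Sf_cont: "continuous_on S (\<lambda>u. Re (Sf n a u u))"
  unfolding Sf_def Av_def
  by (intro continuous_on_Re continuous_on_sum continuous_on_mult continuous_on_cnj coord_cont continuous_on_const)

lemma Nf_nonneg: "Nf n u \<ge> 0" by (simp add: Nf_def sum_nonneg)

lemma Nf_zero: "Nf n u = 0 \<Longrightarrow> i < n \<Longrightarrow> u i = 0"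
  unfolding Nf_def by (subst (asm) sum_nonneg_eq_0_iff) auto


lemma Sf_expand:
  fixes t :: real and u v :: "nat \<Rightarrow> complex"
  shows "Sf n a (\<lambda>i. u i + t * v i) (\<lambda>i. u i + t * v i) =
     Sf n a u u + t * Sf n a v u + t * Sf n a u v + t^2 * Sf n a v v"
proof -
  have Av: "Av n a (\<lambda>i. u i + t * v i) i = Av n a u i + t * Av n a v i" for i
    unfolding Av_def by (simp add: sum.distrib sum_distrib_left ring_distribs mult.left_commute)
  have "Sf n a (\<lambda>i. u i + t * v i) (\<lambda>i. u i + t * v i) =
    (\<Sum>i<n. cnj (u i) * Av n a u i + t * (cnj (v i) * Av n a u i) + t * (cnj (u i) * Av n a v i)
       + t^2 * (cnj (v i) * Av n a v i))"
    unfolding Sf_def Av by (intro sum.cong refl) (simp add: ring_distribs power2_eq_square mult.assoc mult.left_commute)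
  then show ?thesis by (simp add: Sf_def sum.distrib sum_distrib_left)
qed

lemma Sf_herm:
  assumes "\<And>i j. i < n \<Longrightarrow> j < n \<Longrightarrow> cnj (a i j) = a j i"
  shows "Sf n a u v = cnj (Sf n a v u)"
proof -
  have "Sf n a u v = (\<Sum>i<n. \<Sum>j<n. cnj (u i) * a i j * v j)"
    by (simp add: Sf_def Av_def sum_distrib_left mult.assoc)
  also have "\<dots> = (\<Sum>j<n. \<Sum>i<n. cnj (u i) * a i j * v j)" by (rule sum.swap)
  also have "\<dots> = (\<Sum>j<n. \<Sum>i<n. v j * (cnj (a j i) * cnj (u i)))"
    by (intro sum.cong refl) (simp add: assms mult.commute mult.left_commute)
  also have "\<dots> = cnj (\<Sum>j<n. cnj (v j) * (\<Sum>i<n. a j i * u i))"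
    by (simp add: sum_distrib_left)
  finally show ?thesis by (simp add: Sf_def Av_def)
qed

lemma Sf_scale:
  fixes s :: real and u :: "nat \<Rightarrow> complex"
  shows "Sf n a (\<lambda>i. u i / s) (\<lambda>i. u i / s) = Sf n a u u / (s^2)"
proof -
  have "Av n a (\<lambda>i. u i / s) i = Av n a u i / s" for i
    by (simp add: Av_def sum_divide_distrib)
  then show ?thesis
    by (simp add: Sf_def sum_divide_distrib power2_eq_square)
qed

lemma Nf_scale:
  fixes s :: real and u :: "nat \<Rightarrow> complex"
  shows "Nf n (\<lambda>i. u i / s) = Nf n u / (s^2)"
  by (simp add: Nf_def sum_divide_distrib norm_divide power_divide)


lemma Sf_cong: "(\<And>i. i < n \<Longrightarrow> u i = u' i) \<Longrightarrow> (\<And>i. i < n \<Longrightarrow> v i = v' i) \<Longrightarrow> Sf n a u v = Sf n a u' v'"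
  unfolding Sf_def Av_def by (intro sum.cong refl) auto

lemma Nf_cong: "(\<And>i. i < n \<Longrightarrow> u i = u' i) \<Longrightarrow> Nf n u = Nf n u'"
  unfolding Nf_def by (intro sum.cong refl) auto

lemma rayleigh_min:
  assumes n: "n > 0" and herm: "\<And>i j. i < n \<Longrightarrow> j < n \<Longrightarrow> cnj (a i j) = a j i"
  shows "\<exists>\<mu> e. (\<exists>i<n. e i \<noteq> 0) \<and> (\<forall>i<n. Av n a e i = of_real \<mu> * e i) \<and>
     (\<forall>u. \<mu> * Nf n u \<le> Re (Sf n a u u))"
proof -
  define K where "K = PiE UNIV (\<lambda>i::nat. if i < n then cball (0::complex) 1 else {0}) \<inter> {v. Nf n v = 1}"
  have cK: "compact K" unfolding K_def
    by (intro compact_Int_closed compact_box closed_Collect_eq Nf_cont continuous_on_const)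
  define e0 :: "nat \<Rightarrow> complex" where "e0 = (\<lambda>i. if i = 0 then 1 else 0)"
  have "Nf n e0 = (\<Sum>i<n. if i = 0 then 1 else 0)"
    unfolding Nf_def e0_def by (intro sum.cong refl) auto
  also have "\<dots> = 1" using n by simp
  finally have "e0 \<in> K" using n by (auto simp: K_def PiE_iff e0_def)
  then have ne: "K \<noteq> {}" by blast
  obtain e where e: "e \<in> K" "\<And>y. y \<in> K \<Longrightarrow> Re (Sf n a e e) \<le> Re (Sf n a y y)"
    using continuous_attains_inf[OF cK ne Sf_cont] by blast
  define \<mu> where "\<mu> = Re (Sf n a e e)"
  have eN: "Nf n e = 1" using e(1) by (simp add: K_def)
  have lower: "\<mu> * Nf n u \<le> Re (Sf n a u u)" for u
  proof (cases "Nf n u = 0")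
    case True
    then have "Sf n a u u = Sf n a (\<lambda>_. 0) (\<lambda>_. 0)" using Nf_zero by (intro Sf_cong) auto
    then show ?thesis using True by (simp add: Sf_def Av_def)
  next
    case False
    define s where "s = sqrt (Nf n u)"
    have s: "s > 0" "s^2 = Nf n u" using False Nf_nonneg[of n u] by (auto simp: s_def)
    define u' where "u' = (\<lambda>i. if i < n then u i / s else 0)"
    have Nu': "Nf n u' = 1"
    proof -
      have "Nf n u' = Nf n (\<lambda>i. u i / s)" by (rule Nf_cong) (simp add: u'_def)
      also have "\<dots> = 1" unfolding Nf_scale using s False by simp
      finally show ?thesis .
    qed
    have "cmod (u' i) \<le> 1" if "i < n" for i
    proof -
      have "(cmod (u i))^2 \<le> Nf n u"
        unfolding Nf_def using that by (intro member_le_sum) auto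
      then have "cmod (u i) \<le> s" unfolding s_def by (rule real_le_rsqrt)
      then show ?thesis using that s by (simp add: u'_def norm_divide divide_le_eq)
    qed
    then have "u' \<in> K" using Nu' by (auto simp: K_def PiE_iff u'_def)
    then have "\<mu> \<le> Re (Sf n a u' u')" using e(2) by (simp add: \<mu>_def)
    also have "Sf n a u' u' = Sf n a (\<lambda>i. u i / s) (\<lambda>i. u i / s)"
      by (rule Sf_cong) (simp_all add: u'_def)
    also have "\<dots> = Sf n a u u / (s^2)" by (rule Sf_scale)
    finally have "\<mu> \<le> Re (Sf n a u u) / s^2" by simp
    moreover have "Nf n u > 0" using False Nf_nonneg[of n u] by linarith
    ultimately show ?thesis using s by (simp add: pos_le_divide_eq)
  qed
  have enz: "\<exists>i<n. e i \<noteq> 0"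
  proof (rule ccontr)
    assume "\<not> ?thesis"
    then have "Nf n e = 0" by (simp add: Nf_def)
    then show False using eN by simp
  qed
  define B where "B i j = a i j - (if i = j then of_real \<mu> else 0)" for i j
  have AvB: "Av n B v i = Av n a v i - of_real \<mu> * v i" if "i < n" for v i
  proof -
    have "Av n B v i = (\<Sum>j<n. a i j * v j - (if i = j then of_real \<mu> * v j else 0))"
      unfolding Av_def B_def by (intro sum.cong refl) (simp add: left_diff_distrib)
    also have "\<dots> = Av n a v i - (\<Sum>j<n. if i = j then of_real \<mu> * v j else 0)"
      unfolding Av_def by (rule sum_subtractf)
    also have "(\<Sum>j<n. if i = j then of_real \<mu> * v j else 0) = of_real \<mu> * v i"
      using that by (simp add: sum.delta)
    finally show ?thesis .
  qed
  have SfB: "Sf n B u u = Sf n a u u - of_real (\<mu> * Nf n u)" for u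
  proof -
    have "Sf n B u u = (\<Sum>i<n. cnj (u i) * Av n a u i - of_real \<mu> * (u i * cnj (u i)))"
      unfolding Sf_def by (intro sum.cong refl) (simp add: AvB algebra_simps)
    also have "\<dots> = Sf n a u u - of_real \<mu> * (\<Sum>i<n. u i * cnj (u i))"
      by (simp add: Sf_def sum_subtractf sum_distrib_left)
    also have "(\<Sum>i<n. u i * cnj (u i)) = of_real (Nf n u)"
      unfolding Nf_def of_real_sum by (simp only: complex_norm_square)
    finally show ?thesis by simp
  qed
  have Bpos: "0 \<le> Re (Sf n B u u)" for u using lower[of u] SfB[of u] by simp
  have Be: "Re (Sf n B e e) = 0" using SfB[of e] eN by (simp add: \<mu>_def)
  define w where "w i = Av n B e i" for i
  have Swe: "Sf n B w e = of_real (Nf n w)"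
  proof -
    have "Sf n B w e = (\<Sum>i<n. w i * cnj (w i))" unfolding Sf_def w_def by (simp add: mult.commute)
    also have "\<dots> = of_real (Nf n w)" unfolding Nf_def of_real_sum by (simp only: complex_norm_square)
    finally show ?thesis .
  qed
  have hermB: "cnj (B i j) = B j i" if "i < n" "j < n" for i j
    using herm[OF that] by (auto simp: B_def)
  have Sew: "Sf n B e w = cnj (Sf n B w e)" by (rule Sf_herm[OF hermB])
  define N where "N = Nf n w"
  define c where "c = Re (Sf n B w w)"
  have quad: "0 \<le> 2 * t * N + t^2 * c" for t :: real
  proof -
    have "0 \<le> Re (Sf n B (\<lambda>i. e i + t * w i) (\<lambda>i. e i + t * w i))" by (rule Bpos)
    also have "Sf n B (\<lambda>i. e i + t * w i) (\<lambda>i. e i + t * w i) =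
       Sf n B e e + of_real t * of_real N + of_real t * of_real N + of_real t ^ 2 * Sf n B w w"
      unfolding Sf_expand Sew Swe by (simp add: N_def)
    also have "Re \<dots> = 2 * t * N + t^2 * c"
      using Be by (simp add: c_def)
    finally show ?thesis .
  qed
  have "N = 0"
  proof (rule ccontr)
    assume "N \<noteq> 0"
    then have Np: "N > 0" using Nf_nonneg[of n w] by (simp add: N_def)
    have c0: "c \<ge> 0" using Bpos[of w] by (simp add: c_def)
    define t where "t = - N / (c + 1)"
    have t: "t < 0" using Np c0 by (simp add: t_def)
    have tc: "t * c = - (N * (c / (c + 1)))" by (simp add: t_def)
    have "c / (c + 1) \<le> 1" using c0 by (simp add: field_simps)
    then have "N * (c / (c + 1)) \<le> N" using Np by (intro mult_left_le) auto
    then have "2 * N + t * c > 0" using Np tc by linarith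
    then have "t * (2 * N + t * c) < 0" using t by (simp add: mult_neg_pos)
    moreover have "t * (2 * N + t * c) = 2 * t * N + t^2 * c" by (simp add: algebra_simps power2_eq_square)
    ultimately show False using quad[of t] by linarith
  qed
  then have "Av n a e i = of_real \<mu> * e i" if "i < n" for i
    using Nf_zero[of n w i] that AvB[OF that, of e] by (simp add: N_def w_def)
  then show ?thesis using enz lower by blast
qed


definition ip :: "complex vec \<Rightarrow> complex vec \<Rightarrow> complex" where
  "ip v w = (\<Sum>i<dim_vec v. v $ i * cnj (w $ i))"
definition nsq :: "complex vec \<Rightarrow> real" where
  "nsq v = (\<Sum>i<dim_vec v. (cmod (v $ i))\<^sup>2)"

lemma nsq_nonneg: "nsq v \<ge> 0" by (simp add: nsq_def sum_nonneg)

lemma adj_index: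
  assumes "A \<in> carrier_mat m n" "i < n" "j < m"
  shows "mat_adjoint A $$ (i,j) = cnj (A $$ (j,i))"
  using assms unfolding mat_adjoint_def by (simp add: mat_of_rows_index)

lemma adj_carrier: "A \<in> carrier_mat m n \<Longrightarrow> mat_adjoint A \<in> carrier_mat n m"
  by (intro carrier_matI) (simp_all add: mat_adjoint_def)

lemma herm_entries:
  assumes "A \<in> carrier_mat n n" "mat_adjoint A = A" "i < n" "j < n"
  shows "cnj (A $$ (i,j)) = A $$ (j,i)"
  using adj_index[OF assms(1) assms(4) assms(3)] assms(2) by simp

lemma mult_index:
  assumes "A \<in> carrier_mat n m" "v \<in> carrier_vec m" "i < n"
  shows "(A *\<^sub>v v) $ i = (\<Sum>j<m. A $$ (i,j) * v $ j)"
  using assms by (simp add: scalar_prod_def atLeast0LessThan)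

lemma ip_Sf:
  assumes "A \<in> carrier_mat n n" "v \<in> carrier_vec n"
  shows "ip (A *\<^sub>v v) v = Sf n (\<lambda>i j. A $$ (i,j)) (\<lambda>i. v $ i) (\<lambda>i. v $ i)"
proof -
  have m: "\<And>i. i < n \<Longrightarrow> (A *\<^sub>v v) $ i = (\<Sum>j<n. A $$ (i,j) * v $ j)"
    using mult_index[OF assms] by blast
  have d: "dim_vec (A *\<^sub>v v) = n" using assms by simp
  have "ip (A *\<^sub>v v) v = (\<Sum>i<n. (\<Sum>j<n. A $$ (i,j) * v $ j) * cnj (v $ i))"
    unfolding ip_def d by (intro sum.cong refl) (simp only: m lessThan_iff)
  also have "\<dots> = Sf n (\<lambda>i j. A $$ (i,j)) (\<lambda>i. v $ i) (\<lambda>i. v $ i)"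
    by (simp add: Sf_def Av_def mult.commute)
  finally show ?thesis .
qed

lemma nsq_Nf: "v \<in> carrier_vec n \<Longrightarrow> nsq v = Nf n (\<lambda>i. v $ i)"
  by (simp add: nsq_def Nf_def)

lemma eig_finite:
  fixes A :: "complex mat"
  assumes "A \<in> carrier_mat n n"
  shows "finite {l::real. eigenvalue A (of_real l)}"
proof -
  have "char_poly A \<noteq> 0" using degree_monic_char_poly[OF assms] by auto
  then have "finite {k. poly (char_poly A) k = 0}" by (rule poly_roots_finite)
  then have "finite (of_real -` {k. poly (char_poly A) k = 0} :: real set)"
    by (rule finite_vimageI) (auto simp: inj_on_def)
  moreover have "{l::real. eigenvalue A (of_real l)} = of_real -` {k. poly (char_poly A) k = 0}"
    using eigenvalue_root_char_poly[OF assms] by auto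
  ultimately show ?thesis by simp
qed

lemma eigvec_from:
  fixes A :: "complex mat"
  assumes A: "A \<in> carrier_mat n n" and e: "\<exists>i<n. e i \<noteq> 0"
    and ev: "\<forall>i<n. (\<Sum>j<n. A $$ (i,j) * e j) = of_real \<mu> * e i"
  shows "eigenvalue A (of_real \<mu>)"
proof -
  define v where "v = vec n e"
  have "v \<in> carrier_vec (dim_row A)" using A by (simp add: v_def)
  moreover have "v \<noteq> 0\<^sub>v (dim_row A)"
  proof
    assume "v = 0\<^sub>v (dim_row A)"
    then have "\<forall>i<n. e i = 0" using A by (metis carrier_matD(1) index_vec index_zero_vec(1) v_def)
    then show False using e by blast
  qed
  moreover have "A *\<^sub>v v = of_real \<mu> \<cdot>\<^sub>v v"
  proof (rule eq_vecI)
    fix i assume "i < dim_vec (of_real \<mu> \<cdot>\<^sub>v v)"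
    then have i: "i < n" by (simp add: v_def)
    have "(A *\<^sub>v v) $ i = (\<Sum>j<n. A $$ (i,j) * e j)"
      using mult_index[OF A _ i, of v] by (simp add: v_def)
    also have "\<dots> = (of_real \<mu> \<cdot>\<^sub>v v) $ i" using ev i by (simp add: v_def)
    finally show "(A *\<^sub>v v) $ i = (of_real \<mu> \<cdot>\<^sub>v v) $ i" .
  qed (use A in \<open>simp add: v_def\<close>)
  ultimately show ?thesis unfolding eigenvalue_def eigenvector_def by blast
qed

lemma rayleigh_mat:
  fixes A :: "complex mat"
  assumes A: "A \<in> carrier_mat n n" and adj: "mat_adjoint A = A" and n: "n > 0"
  shows "\<exists>\<mu>1 \<mu>2. eigenvalue A (of_real \<mu>1) \<and> eigenvalue A (of_real \<mu>2) \<and>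
    (\<forall>v\<in>carrier_vec n. \<mu>1 * nsq v \<le> Re (ip (A *\<^sub>v v) v) \<and> Re (ip (A *\<^sub>v v) v) \<le> \<mu>2 * nsq v)"
proof -
  define a where "a = (\<lambda>i j. A $$ (i,j))"
  define a' where "a' = (\<lambda>i j. - A $$ (i,j))"
  have ha: "cnj (a i j) = a j i" if "i < n" "j < n" for i j
    using herm_entries[OF A adj that] by (simp add: a_def)
  have ha': "cnj (a' i j) = a' j i" if "i < n" "j < n" for i j
    using herm_entries[OF A adj that] by (simp add: a'_def)
  obtain \<mu>1 e1 where 1: "\<exists>i<n. e1 i \<noteq> 0" "\<forall>i<n. Av n a e1 i = of_real \<mu>1 * e1 i"
    "\<forall>u. \<mu>1 * Nf n u \<le> Re (Sf n a u u)"
    using rayleigh_min[of n a, OF n ha] by blast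
  obtain \<mu>' e2 where 2: "\<exists>i<n. e2 i \<noteq> 0" "\<forall>i<n. Av n a' e2 i = of_real \<mu>' * e2 i"
    "\<forall>u. \<mu>' * Nf n u \<le> Re (Sf n a' u u)"
    using rayleigh_min[of n a', OF n ha'] by blast
  have Sfa': "Sf n a' u u = - Sf n a u u" for u
    by (simp add: Sf_def Av_def a'_def a_def sum_negf)
  have E1: "eigenvalue A (of_real \<mu>1)"
    using eigvec_from[OF A 1(1)] 1(2) by (simp add: Av_def a_def)
  have "\<forall>i<n. (\<Sum>j<n. A $$ (i,j) * e2 j) = of_real (- \<mu>') * e2 i"
  proof (intro allI impI)
    fix i assume "i < n"
    then have "Av n a' e2 i = of_real \<mu>' * e2 i" using 2(2) by blast
    then show "(\<Sum>j<n. A $$ (i,j) * e2 j) = of_real (- \<mu>') * e2 i"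
      by (simp add: Av_def a'_def sum_negf minus_equation_iff[of "sum _ _"])
  qed
  then have E2: "eigenvalue A (of_real (- \<mu>'))" using eigvec_from[OF A 2(1)] by blast
  have "\<mu>1 * nsq v \<le> Re (ip (A *\<^sub>v v) v) \<and> Re (ip (A *\<^sub>v v) v) \<le> (- \<mu>') * nsq v"
    if "v \<in> carrier_vec n" for v
  proof -
    have "ip (A *\<^sub>v v) v = Sf n a (\<lambda>i. v $ i) (\<lambda>i. v $ i)" using ip_Sf[OF A that] by (simp add: a_def)
    moreover have "nsq v = Nf n (\<lambda>i. v $ i)" using nsq_Nf[OF that] .
    ultimately show ?thesis using 1(3) 2(3) Sfa' by (metis minus_complex.sel(1) add.inverse_inverse mult_minus_left neg_le_iff_le uminus_complex.sel(1))
  qed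
  then show ?thesis using E1 E2 by blast
qed

lemma W_bounds:
  fixes A :: "complex mat"
  assumes A: "A \<in> carrier_mat n n" and adj: "mat_adjoint A = A" and n: "n > 0"
    and v: "v \<in> carrier_vec n"
  shows "Min {l. eigenvalue A (of_real l)} * nsq v \<le> Re (ip (A *\<^sub>v v) v)"
    "Re (ip (A *\<^sub>v v) v) \<le> Max {l. eigenvalue A (of_real l)} * nsq v"
proof -
  obtain \<mu>1 \<mu>2 where m: "eigenvalue A (of_real \<mu>1)" "eigenvalue A (of_real \<mu>2)"
    "\<mu>1 * nsq v \<le> Re (ip (A *\<^sub>v v) v)" "Re (ip (A *\<^sub>v v) v) \<le> \<mu>2 * nsq v"
    using rayleigh_mat[OF A adj n] v by blast
  have "Min {l. eigenvalue A (of_real l)} \<le> \<mu>1" using m(1) eig_finite[OF A] by (intro Min_le) auto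
  then show "Min {l. eigenvalue A (of_real l)} * nsq v \<le> Re (ip (A *\<^sub>v v) v)"
    using m(3) nsq_nonneg[of v] by (meson mult_right_mono order_trans)
  have "\<mu>2 \<le> Max {l. eigenvalue A (of_real l)}" using m(2) eig_finite[OF A] by (intro Max_ge) auto
  then show "Re (ip (A *\<^sub>v v) v) \<le> Max {l. eigenvalue A (of_real l)} * nsq v"
    using m(4) nsq_nonneg[of v] by (meson mult_right_mono order_trans)
qed




lemma row_sprod:
  assumes "A \<in> carrier_mat n m" "v \<in> carrier_vec m" "i < n"
  shows "Matrix.row A i \<bullet> v = (\<Sum>j<m. A $$ (i,j) * v $ j)"
  using mult_index[OF assms] assms by simp

lemma ip_self: "ip v v = of_real (nsq v)"
  unfolding ip_def nsq_def of_real_sum by (simp only: complex_norm_square)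

lemma ip_CS:
  assumes "dim_vec u = dim_vec v"
  shows "cmod (ip u v) \<le> sqrt (nsq u) * sqrt (nsq v)"
proof -
  have "cmod (ip u v) \<le> (\<Sum>i<dim_vec u. cmod (u $ i) * cmod (v $ i))"
    unfolding ip_def by (rule order_trans[OF norm_sum]) (simp add: norm_mult)
  also have "\<dots> \<le> sqrt (nsq u * nsq v)"
  proof (rule real_le_rsqrt)
    show "(\<Sum>i<dim_vec u. cmod (u $ i) * cmod (v $ i))\<^sup>2 \<le> nsq u * nsq v"
      unfolding nsq_def assms by (rule Cauchy_Schwarz_ineq_sum)
  qed
  also have "\<dots> = sqrt (nsq u) * sqrt (nsq v)" by (rule real_sqrt_mult)
  finally show ?thesis .
qed

lemma unitary_nsq:
  assumes U: "U \<in> carrier_mat m n" and uu: "mat_adjoint U * U = 1\<^sub>m n" and v: "v \<in> carrier_vec n"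
  shows "nsq (U *\<^sub>v v) = nsq v"
proof -
  have ortho: "(\<Sum>i<m. cnj (U $$ (i,k)) * U $$ (i,j)) = (if k = j then 1 else 0)"
    if "k < n" "j < n" for k j
  proof -
    have "(mat_adjoint U * U) $$ (k,j) = (\<Sum>i<m. mat_adjoint U $$ (k,i) * U $$ (i,j))"
      using U adj_carrier[OF U] that
      by (simp add: scalar_prod_def atLeast0LessThan)
    also have "\<dots> = (\<Sum>i<m. cnj (U $$ (i,k)) * U $$ (i,j))"
      using adj_index[OF U] that by (intro sum.cong refl) auto
    finally show ?thesis using uu that by simp
  qed
  have dv: "dim_vec v = n" using v by simp
  have "of_real (nsq (U *\<^sub>v v)) = (\<Sum>i<m. (\<Sum>j<n. U $$ (i,j) * v $ j) * cnj (\<Sum>k<n. U $$ (i,k) * v $ k))"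
    unfolding ip_self[symmetric] ip_def using U v
    by (intro sum.cong) (simp_all add: row_sprod)
  also have "\<dots> = (\<Sum>i<m. \<Sum>j<n. \<Sum>k<n. v $ j * cnj (v $ k) * (cnj (U $$ (i,k)) * U $$ (i,j)))"
    by (simp add: sum_distrib_left sum_distrib_right mult_ac) (rule sum.cong[OF refl], rule sum.swap)
  also have "\<dots> = (\<Sum>j<n. \<Sum>k<n. v $ j * cnj (v $ k) * (\<Sum>i<m. cnj (U $$ (i,k)) * U $$ (i,j)))"
    by (simp add: sum_distrib_left sum.swap[of _ "{..<m}"])
  also have "\<dots> = (\<Sum>j<n. \<Sum>k<n. if k = j then v $ j * cnj (v $ k) else 0)"
    by (intro sum.cong refl) (simp add: ortho)
  also have "\<dots> = (\<Sum>j<n. v $ j * cnj (v $ j))" by simp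
  also have "\<dots> = of_real (nsq v)" unfolding ip_self[symmetric] ip_def dv ..
  finally show ?thesis by (simp only: of_real_eq_iff)
qed


definition mco :: "('x \<Rightarrow> 'x \<Rightarrow> real) \<Rightarrow> ('x \<Rightarrow> nat) \<Rightarrow> ('x \<Rightarrow> 'x \<Rightarrow> complex mat)
    \<Rightarrow> ('x \<Rightarrow> complex mat) \<Rightarrow> 'x \<times> nat \<Rightarrow> 'x \<times> nat \<Rightarrow> complex" where
  "mco b d \<Phi> W p q =
    (if snd p < d (fst p) \<and> snd q < d (fst q) then
       (if fst p = fst q then (if snd p = snd q then of_real (\<Sum>z\<in>{z. b (fst p) z > 0}. b (fst p) z) else 0)
           + W (fst p) $$ (snd p, snd q) else 0)
       - (if b (fst p) (fst q) > 0 then of_real (b (fst p) (fst q)) * \<Phi> (fst p) (fst q) $$ (snd p, snd q) else 0)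
     else if p = q then 1 else 0)"

lemma mco_simp: "mco b d \<Phi> W (x,i) (y,j) =
    (if i < d x \<and> j < d y then
       (if x = y then (if i = j then of_real (\<Sum>z\<in>{z. b x z > 0}. b x z) else 0) + W x $$ (i, j) else 0)
       - (if b x y > 0 then of_real (b x y) * \<Phi> x y $$ (i, j) else 0)
     else if x = y \<and> i = j then 1 else 0)"
  by (simp add: mco_def)

definition secF :: "('x \<Rightarrow> nat) \<Rightarrow> ('x \<times> nat \<Rightarrow> complex) \<Rightarrow> 'x \<Rightarrow> complex vec" where
  "secF d F = (\<lambda>x. vec (d x) (\<lambda>i. F (x,i)))"

locale mg =
  fixes b :: "'x::countable \<Rightarrow> 'x \<Rightarrow> real" and d :: "'x \<Rightarrow> nat"
    and \<Phi> :: "'x \<Rightarrow> 'x \<Rightarrow> complex mat" and W :: "'x \<Rightarrow> complex mat"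
  assumes wg: "weighted_graph b" and dpos: "\<And>x. d x > 0" and conn: "connection b d \<Phi>"
    and sa: "selfadjoint_endo d W" and lf: "locally_finite b"
begin

lemma bnn: "b x y \<ge> 0" using wg by (simp add: weighted_graph_def)
lemma bxx: "b x x = 0" using wg by (simp add: weighted_graph_def)
lemma bsym: "b x y = b y x" using wg by (simp add: weighted_graph_def)
lemma Yfin: "finite {y. b x y > 0}" using lf by (simp add: locally_finite_def)
lemma b0: "\<not> b x y > 0 \<Longrightarrow> b x y = 0" using bnn[of x y] by simp

lemma Wc: "W x \<in> carrier_mat (d x) (d x)" using sa by (simp add: selfadjoint_endo_def)
lemma Wadj: "mat_adjoint (W x) = W x" using sa by (simp add: selfadjoint_endo_def)

lemma Phic: "b x y > 0 \<Longrightarrow> \<Phi> x y \<in> carrier_mat (d x) (d y)"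
  using conn by (simp add: connection_def unitary_map_def)
lemma Phiu: "b x y > 0 \<Longrightarrow> mat_adjoint (\<Phi> x y) * \<Phi> x y = 1\<^sub>m (d y)"
  using conn by (simp add: connection_def unitary_map_def)
lemma Phi_adj: assumes "b x y > 0" shows "\<Phi> y x = mat_adjoint (\<Phi> x y)"
proof -
  have b': "b y x > 0" using assms bsym by simp
  have c1: "\<Phi> x y \<in> carrier_mat (d x) (d y)" by (rule Phic[OF assms])
  have c2: "\<Phi> y x \<in> carrier_mat (d y) (d x)" by (rule Phic[OF b'])
  have c3: "mat_adjoint (\<Phi> x y) \<in> carrier_mat (d y) (d x)" by (rule adj_carrier[OF c1])
  have e1: "\<Phi> y x * \<Phi> x y = 1\<^sub>m (d y)" using conn assms by (simp add: connection_def)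
  have e2: "\<Phi> x y * mat_adjoint (\<Phi> x y) = 1\<^sub>m (d x)"
    using conn assms by (simp add: connection_def unitary_map_def)
  have "\<Phi> y x = \<Phi> y x * (\<Phi> x y * mat_adjoint (\<Phi> x y))" using e2 c2 by simp
  also have "\<dots> = (\<Phi> y x * \<Phi> x y) * mat_adjoint (\<Phi> x y)" using c1 c2 c3 by simp
  also have "\<dots> = mat_adjoint (\<Phi> x y)" using e1 c3 by simp
  finally show ?thesis .
qed

lemma Phi_entry: assumes "b x y > 0" "i < d x" "j < d y"
  shows "\<Phi> y x $$ (j,i) = cnj (\<Phi> x y $$ (i,j))"
  using Phi_adj[OF assms(1)] adj_index[OF Phic[OF assms(1)] assms(3) assms(2)] by simp

abbreviation "m \<equiv> mco b d \<Phi> W"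

lemma mco_fin: "finite (nb m p)"
proof -
  obtain x i where p: "p = (x,i)" by (cases p)
  have "nb m p \<subseteq> {(x,i)} \<union> Sigma ({x} \<union> {y. b x y > 0}) (\<lambda>y. {..<d y})"
    unfolding nb_def p by (auto simp: mco_simp split: if_splits)
  moreover have "finite (Sigma ({x} \<union> {y. b x y > 0}) (\<lambda>y. {..<d y}))"
    using Yfin by (intro finite_SigmaI) auto
  ultimately show ?thesis by (meson finite_Un finite.emptyI finite_insert finite_subset)
qed

lemma mco_herm: "m q p = cnj (m p q)"
proof -
  obtain x i where p: "p = (x,i)" by (cases p)
  obtain y j where q: "q = (y,j)" by (cases q)
  show ?thesis
  proof (cases "i < d x \<and> j < d y")
    case True
    show ?thesis
    proof (cases "x = y")
      case xy: True
      then have "cnj (W x $$ (i,j)) = W x $$ (j,i)" using herm_entries[OF Wc Wadj] True by auto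
      then show ?thesis using True xy bxx by (auto simp: p q mco_simp)
    next
      case False
      show ?thesis
      proof (cases "b x y > 0")
        case True
        then show ?thesis using \<open>i < d x \<and> j < d y\<close> False Phi_entry[OF True] bsym[of x y]
          by (auto simp: p q mco_simp)
      next
        case nb: False
        then show ?thesis using \<open>i < d x \<and> j < d y\<close> False bsym[of x y] by (auto simp: p q mco_simp)
      qed
    qed
  next
    case False
    then show ?thesis by (auto simp: p q mco_simp)
  qed
qed


lemma secF_carrier: "secF d F x \<in> carrier_vec (d x)" by (simp add: secF_def)
lemma secF_index: "j < d y \<Longrightarrow> secF d F y $ j = F (y,j)" by (simp add: secF_def)

lemma LopM:
  assumes i: "i < d x"
  shows "magnetic_op b d \<Phi> W (secF d F) x $ i = Lop m F (x,i)"
proof -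
  define Y where "Y = {y. b x y > 0}"
  have fY: "finite Y" using Yfin by (simp add: Y_def)
  have xY: "x \<notin> Y" using bxx by (simp add: Y_def)
  define f where "f = secF d F"
  have fc: "f y \<in> carrier_vec (d y)" for y by (simp add: f_def secF_carrier)
  have fi: "j < d y \<Longrightarrow> f y $ j = F (y,j)" for y j by (simp add: f_def secF_index)
  have Pf: "(\<Phi> x y *\<^sub>v f y) $ i = (\<Sum>j<d y. \<Phi> x y $$ (i,j) * F (y,j))" if "y \<in> Y" for y
  proof -
    have "(\<Phi> x y *\<^sub>v f y) $ i = (\<Sum>j<d y. \<Phi> x y $$ (i,j) * f y $ j)"
      using mult_index[OF Phic fc i] that by (simp add: Y_def)
    also have "\<dots> = (\<Sum>j<d y. \<Phi> x y $$ (i,j) * F (y,j))" by (intro sum.cong refl) (simp add: fi)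
    finally show ?thesis .
  qed
  have Wf: "(W x *\<^sub>v f x) $ i = (\<Sum>j<d x. W x $$ (i,j) * F (x,j))"
  proof -
    have "(W x *\<^sub>v f x) $ i = (\<Sum>j<d x. W x $$ (i,j) * f x $ j)"
      using mult_index[OF Wc fc i] .
    also have "\<dots> = (\<Sum>j<d x. W x $$ (i,j) * F (x,j))" by (intro sum.cong refl) (simp add: fi)
    finally show ?thesis .
  qed
  have "magnetic_op b d \<Phi> W f x $ i =
     (\<Sum>y\<in>Y. of_real (b x y) * (f x $ i - (\<Phi> x y *\<^sub>v f y) $ i)) + (W x *\<^sub>v f x) $ i"
    unfolding magnetic_op_def Y_def using i Wc[of x] by simp
  also have "\<dots> = (\<Sum>y\<in>Y. of_real (b x y) * (F (x,i) - (\<Sum>j<d y. \<Phi> x y $$ (i,j) * F (y,j))))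
      + (\<Sum>j<d x. W x $$ (i,j) * F (x,j))"
    using Pf Wf fi[OF i] by simp
  also have "\<dots> = (\<Sum>y\<in>Y. of_real (b x y) * F (x,i)) + (\<Sum>j<d x. W x $$ (i,j) * F (x,j))
      + (\<Sum>y\<in>Y. \<Sum>j<d y. - (of_real (b x y) * \<Phi> x y $$ (i,j)) * F (y,j))"
    by (simp add: right_diff_distrib sum_subtractf sum_distrib_left sum_negf mult.assoc)
  finally have L: "magnetic_op b d \<Phi> W f x $ i = \<dots>" .
  define C where "C = Sigma (insert x Y) (\<lambda>y. {..<d y})"
  have fC: "finite C" using fY by (simp add: C_def)
  have nbC: "nb m (x,i) \<subseteq> C"
    unfolding nb_def C_def Y_def using i by (auto simp: mco_simp split: if_splits)
  have "Lop m F (x,i) = (\<Sum>q\<in>C. m (x,i) q * F q)" by (rule Lop_sum[OF fC nbC])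
  also have "\<dots> = (\<Sum>y\<in>insert x Y. \<Sum>j<d y. m (x,i) (y,j) * F (y,j))"
    unfolding C_def using fY by (subst sum.Sigma) auto
  also have "\<dots> = (\<Sum>j<d x. m (x,i) (x,j) * F (x,j)) + (\<Sum>y\<in>Y. \<Sum>j<d y. m (x,i) (y,j) * F (y,j))"
    using fY xY by simp
  also have "(\<Sum>j<d x. m (x,i) (x,j) * F (x,j)) =
      (\<Sum>j<d x. (if i = j then of_real (\<Sum>z\<in>Y. b x z) * F (x,j) else 0) + W x $$ (i,j) * F (x,j))"
    using i bxx by (intro sum.cong refl) (auto simp: mco_simp Y_def ring_distribs)
  also have "\<dots> = of_real (\<Sum>z\<in>Y. b x z) * F (x,i) + (\<Sum>j<d x. W x $$ (i,j) * F (x,j))"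
    using i by (simp add: sum.distrib)
  also have "of_real (\<Sum>z\<in>Y. b x z) * F (x,i) = (\<Sum>y\<in>Y. of_real (b x y) * F (x,i))"
    by (simp add: sum_distrib_right)
  also have "(\<Sum>y\<in>Y. \<Sum>j<d y. m (x,i) (y,j) * F (y,j)) =
      (\<Sum>y\<in>Y. \<Sum>j<d y. - (of_real (b x y) * \<Phi> x y $$ (i,j)) * F (y,j))"
    using i xY by (intro sum.cong refl) (auto simp: mco_simp Y_def)
  finally show ?thesis using L by (simp add: f_def)
qed


lemma qform_fin:
  fixes g :: "'x \<Rightarrow> complex"
  assumes fD0: "finite D0" and g0: "\<And>x. x \<notin> D0 \<Longrightarrow> g x = 0"
    and D: "D = D0 \<union> (\<Union>x\<in>D0. {y. b x y > 0})"
  shows "qform b V g = (\<Sum>x\<in>D. \<Sum>y\<in>D. b x y * (cmod (g x - g y))\<^sup>2) / 2 + (\<Sum>x\<in>D. (cmod (g x))\<^sup>2 * V x)"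
proof -
  have fD: "finite D" using fD0 Yfin by (simp add: D)
  have D0D: "D0 \<subseteq> D" by (simp add: D)
  have 1: "(\<Sum>\<^sub>\<infinity>(x, y). b x y * (cmod (g x - g y))\<^sup>2) = (\<Sum>\<^sub>\<infinity>(x, y)\<in>D \<times> D. b x y * (cmod (g x - g y))\<^sup>2)"
  proof (rule infsum_cong_neutral)
    fix p assume "p \<in> UNIV - D \<times> D"
    then obtain x y where p: "p = (x,y)" "(x,y) \<notin> D \<times> D" by (cases p) auto
    show "(case p of (x, y) \<Rightarrow> b x y * (cmod (g x - g y))\<^sup>2) = 0"
    proof (cases "b x y > 0")
      case False then show ?thesis using b0 p by simp
    next
      case True
      have "x \<notin> D0" using True p by (auto simp: D)
      moreover have "y \<notin> D0" using True p bsym[of x y] by (auto simp: D)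
      ultimately show ?thesis using g0 p by simp
    qed
  qed auto
  have 2: "(\<Sum>\<^sub>\<infinity>x. (cmod (g x))\<^sup>2 * V x) = (\<Sum>\<^sub>\<infinity>x\<in>D. (cmod (g x))\<^sup>2 * V x)"
    by (rule infsum_cong_neutral) (use g0 D0D in auto)
  show ?thesis unfolding qform_def 1 2 using fD
    by (simp add: sum.cartesian_product)
qed

definition Fq :: "'x set \<Rightarrow> ('x \<Rightarrow> real) \<Rightarrow> ('x \<Rightarrow> real) \<Rightarrow> real" where
  "Fq D V v = (\<Sum>x\<in>D. \<Sum>y\<in>D. b x y * (v x - v y)\<^sup>2) / 2 + (\<Sum>x\<in>D. (v x)\<^sup>2 * V x)"
definition Bq :: "'x set \<Rightarrow> ('x \<Rightarrow> real) \<Rightarrow> ('x \<Rightarrow> real) \<Rightarrow> ('x \<Rightarrow> real) \<Rightarrow> real" where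
  "Bq D V v w = (\<Sum>x\<in>D. \<Sum>y\<in>D. b x y * (v x - v y) * (w x - w y)) / 2 + (\<Sum>x\<in>D. v x * w x * V x)"

lemma Fq_expand:
  "Fq D V (\<lambda>x. u x + t * w x) = Fq D V u + 2 * t * Bq D V u w + t\<^sup>2 * Fq D V w"
proof -
  have p1: "b x y * ((u x + t * w x) - (u y + t * w y))\<^sup>2 =
     b x y * (u x - u y)\<^sup>2 + 2 * t * (b x y * (u x - u y) * (w x - w y)) + t\<^sup>2 * (b x y * (w x - w y)\<^sup>2)" for x y
    by (simp add: power2_eq_square algebra_simps)
  have p2: "(u x + t * w x)\<^sup>2 * V x = (u x)\<^sup>2 * V x + 2 * t * (u x * w x * V x) + t\<^sup>2 * ((w x)\<^sup>2 * V x)" for x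
    by (simp add: power2_eq_square algebra_simps)
  have s2: "(\<Sum>x\<in>D. \<Sum>y\<in>D. f x y + c1 * g x y + c2 * h x y) =
    (\<Sum>x\<in>D. \<Sum>y\<in>D. f x y) + c1 * (\<Sum>x\<in>D. \<Sum>y\<in>D. g x y) + c2 * (\<Sum>x\<in>D. \<Sum>y\<in>D. h x y)"
    for f g h :: "'x \<Rightarrow> 'x \<Rightarrow> real" and c1 c2 :: real
    by (simp add: sum.distrib sum_distrib_left)
  have s1: "(\<Sum>x\<in>D. f x + c1 * g x + c2 * h x) =
    (\<Sum>x\<in>D. f x) + c1 * (\<Sum>x\<in>D. g x) + c2 * (\<Sum>x\<in>D. h x)"
    for f g h :: "'x \<Rightarrow> real" and c1 c2 :: real
    by (simp add: sum.distrib sum_distrib_left)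
  show ?thesis
    unfolding Fq_def Bq_def p1 p2 s1 s2 by (simp add: field_simps)
qed

lemma qform_Fq:
  fixes v :: "'x \<Rightarrow> real"
  assumes "finite D0" "\<And>x. x \<notin> D0 \<Longrightarrow> v x = 0" "D = D0 \<union> (\<Union>x\<in>D0. {y. b x y > 0})"
  shows "qform b V (\<lambda>x. of_real (v x)) = Fq D V v"
proof -
  have "qform b V (\<lambda>x. of_real (v x)) = (\<Sum>x\<in>D. \<Sum>y\<in>D. b x y * (cmod (complex_of_real (v x) - of_real (v y)))\<^sup>2) / 2
     + (\<Sum>x\<in>D. (cmod (complex_of_real (v x)))\<^sup>2 * V x)"
    by (rule qform_fin[OF assms(1) _ assms(3)]) (use assms(2) in simp)
  also have "\<dots> = Fq D V v"
    unfolding Fq_def of_real_diff[symmetric] norm_of_real by simp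
  finally show ?thesis .
qed


lemma pert:
  fixes u :: "'x \<Rightarrow> real"
  assumes qn: "qform_nonneg b V"
    and fS: "finite S" and u0: "\<And>x. x \<notin> S \<Longrightarrow> u x = 0" and unn: "\<And>x. u x \<ge> 0"
    and z: "z \<notin> S" and y0: "y0 \<in> S" "u y0 > 0" "b z y0 > 0"
    and neg: "qform b V (\<lambda>x. of_real (u x)) \<le> 0"
  shows False
proof -
  define D0 where "D0 = insert z S"
  define D where "D = D0 \<union> (\<Union>x\<in>D0. {y. b x y > 0})"
  have fD0: "finite D0" using fS by (simp add: D0_def)
  have fD: "finite D" using fD0 Yfin by (simp add: D_def)
  have zD: "z \<in> D" and y0D: "y0 \<in> D" using y0 by (auto simp: D_def D0_def)
  define \<delta> where "\<delta> = (\<lambda>x. if x = z then 1 else (0::real))"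
  have u0': "\<And>x. x \<notin> D0 \<Longrightarrow> u x = 0" using u0 by (auto simp: D0_def)
  have Fu: "Fq D V u \<le> 0" using qform_Fq[of D0 u D V, OF fD0 u0' D_def] neg by simp
  define P where "P = (\<Sum>y\<in>D. b z y * u y)"
  have uz: "u z = 0" using u0 z by blast
  have Bqd: "Bq D V u \<delta> = - P"
  proof -
    have pt: "b x y * (u x - u y) * (\<delta> x - \<delta> y) =
      (if x = z then b z y * (u z - u y) else 0) - (if y = z then b x z * (u x - u z) else 0)" for x y
      by (simp add: \<delta>_def)
    have in1: "(\<Sum>y\<in>D. if x = z then b z y * (u z - u y) else 0) =
        (if x = z then (\<Sum>y\<in>D. b z y * (u z - u y)) else 0)" for x
      by simp
    have "(\<Sum>x\<in>D. \<Sum>y\<in>D. b x y * (u x - u y) * (\<delta> x - \<delta> y)) =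
       (\<Sum>x\<in>D. \<Sum>y\<in>D. (if x = z then b z y * (u z - u y) else 0))
       - (\<Sum>x\<in>D. \<Sum>y\<in>D. (if y = z then b x z * (u x - u z) else 0))"
      unfolding pt by (simp add: sum_subtractf)
    also have "(\<Sum>x\<in>D. \<Sum>y\<in>D. (if x = z then b z y * (u z - u y) else 0)) = (\<Sum>y\<in>D. b z y * (u z - u y))"
      unfolding in1 using zD fD by (simp add: sum.delta)
    also have "(\<Sum>x\<in>D. \<Sum>y\<in>D. (if y = z then b x z * (u x - u z) else 0)) = (\<Sum>x\<in>D. b x z * (u x - u z))"
      using zD fD by (simp add: sum.delta)
    also have "(\<Sum>y\<in>D. b z y * (u z - u y)) = - P" by (simp add: uz P_def sum_negf)
    also have "(\<Sum>x\<in>D. b x z * (u x - u z)) = P" by (simp add: uz P_def bsym[of _ z])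
    finally have A: "(\<Sum>x\<in>D. \<Sum>y\<in>D. b x y * (u x - u y) * (\<delta> x - \<delta> y)) = - 2 * P" by simp
    have "(\<Sum>x\<in>D. u x * \<delta> x * V x) = (\<Sum>x\<in>D. if x = z then u z * V z else 0)"
      by (intro sum.cong refl) (simp add: \<delta>_def)
    also have "\<dots> = 0" using uz by simp
    finally show ?thesis using A by (simp add: Bq_def)
  qed
  have "b z y0 * u y0 \<le> P" unfolding P_def
    by (rule member_le_sum[OF y0D _ fD]) (simp add: bnn unn)
  moreover have "b z y0 * u y0 > 0" using y0 by simp
  ultimately have Ppos: "P > 0" by linarith
  define c where "c = Fq D V \<delta>"
  define t where "t = P / (\<bar>c\<bar> + 1)"
  have tpos: "t > 0" using Ppos by (simp add: t_def add_pos_nonneg)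
  have "t * \<bar>c\<bar> < P"
  proof -
    have "t * \<bar>c\<bar> = P * (\<bar>c\<bar> / (\<bar>c\<bar> + 1))" by (simp add: t_def)
    also have "\<dots> < P * 1" using Ppos by (intro mult_strict_left_mono) auto
    finally show ?thesis by simp
  qed
  moreover have "t * c \<le> t * \<bar>c\<bar>" using tpos by (intro mult_left_mono) auto
  ultimately have "- 2 * P + t * c < 0" using Ppos by linarith
  then have "t * (- 2 * P + t * c) < 0" using tpos by (simp add: mult_pos_neg)
  moreover have "t * (- 2 * P + t * c) = 2 * t * (- P) + t\<^sup>2 * c" by (simp add: algebra_simps power2_eq_square)
  ultimately have key: "2 * t * (- P) + t\<^sup>2 * c < 0" by simp
  have "Fq D V (\<lambda>x. u x + t * \<delta> x) = Fq D V u + 2 * t * Bq D V u \<delta> + t\<^sup>2 * c"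
    by (simp add: Fq_expand c_def)
  also have "\<dots> < 0" using Fu key Bqd by simp
  finally have lt: "Fq D V (\<lambda>x. u x + t * \<delta> x) < 0" .
  have v0: "\<And>x. x \<notin> D0 \<Longrightarrow> u x + t * \<delta> x = 0" using u0' by (auto simp: \<delta>_def D0_def)
  have "qform b V (\<lambda>x. of_real (u x + t * \<delta> x)) = Fq D V (\<lambda>x. u x + t * \<delta> x)"
    by (rule qform_Fq[OF fD0 v0 D_def])
  moreover have "finite {x. complex_of_real (u x + t * \<delta> x) \<noteq> 0}"
  proof (rule finite_subset[OF _ fD0])
    show "{x. complex_of_real (u x + t * \<delta> x) \<noteq> 0} \<subseteq> D0"
      using v0 by (metis (mono_tags, lifting) mem_Collect_eq of_real_0 subsetI)
  qed
  ultimately have "Fq D V (\<lambda>x. u x + t * \<delta> x) \<ge> 0" using qn by (auto simp: qform_nonneg_def)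
  then show False using lt by simp
qed


lemma edge_out:
  assumes fS: "finite S" and x1: "x1 \<in> S" and inf: "infinite (component b x1)"
  shows "\<exists>y0 z. y0 \<in> S \<and> z \<notin> S \<and> b y0 z > 0"
proof -
  obtain w where w: "w \<in> component b x1" "w \<notin> S"
    using inf fS by (meson finite_subset subsetI)
  have "(x1, w) \<in> (edges b)\<^sup>*" using w(1) by (simp add: component_def)
  then have "w \<notin> S \<longrightarrow> (\<exists>y0 z. y0 \<in> S \<and> z \<notin> S \<and> b y0 z > 0)"
  proof (induction rule: rtrancl_induct)
    case base then show ?case using x1 by blast
  next
    case (step y w)
    then show ?case by (cases "y \<in> S") (auto simp: edges_def)
  qed
  then show ?thesis using w(2) by blast
qed

lemma deg_eq: "deg b x = (\<Sum>y\<in>{y. b x y > 0}. b x y)"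
proof -
  have "deg b x = (\<Sum>\<^sub>\<infinity>y\<in>{y. b x y > 0}. b x y)"
    unfolding deg_def by (rule infsum_cong_neutral) (auto simp: b0)
  then show ?thesis using Yfin by simp
qed

lemma Fq_sym:
  assumes fD: "finite D"
  shows "Fq D V u = (\<Sum>x\<in>D. (\<Sum>y\<in>D. b x y * ((u x)\<^sup>2 - u x * u y)) + V x * (u x)\<^sup>2)"
proof -
  have pt: "b x y * (u x - u y)\<^sup>2 = b x y * ((u x)\<^sup>2 - u x * u y) + b y x * ((u y)\<^sup>2 - u y * u x)" for x y
    by (simp add: bsym[of y x] power2_eq_square algebra_simps)
  have "(\<Sum>x\<in>D. \<Sum>y\<in>D. b x y * (u x - u y)\<^sup>2) =
     (\<Sum>x\<in>D. \<Sum>y\<in>D. b x y * ((u x)\<^sup>2 - u x * u y)) + (\<Sum>x\<in>D. \<Sum>y\<in>D. b y x * ((u y)\<^sup>2 - u y * u x))"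
    unfolding pt by (simp add: sum.distrib)
  also have "(\<Sum>x\<in>D. \<Sum>y\<in>D. b y x * ((u y)\<^sup>2 - u y * u x)) = (\<Sum>x\<in>D. \<Sum>y\<in>D. b x y * ((u x)\<^sup>2 - u x * u y))"
    by (rule sum.swap)
  finally have "(\<Sum>x\<in>D. \<Sum>y\<in>D. b x y * (u x - u y)\<^sup>2) / 2 = (\<Sum>x\<in>D. \<Sum>y\<in>D. b x y * ((u x)\<^sup>2 - u x * u y))"
    by simp
  then show ?thesis unfolding Fq_def by (simp add: sum.distrib mult.commute)
qed

lemma ipM:
  assumes fc: "\<And>y. f y \<in> carrier_vec (d y)"
  shows "ip (magnetic_op b d \<Phi> W f x) (f x) =
    (\<Sum>y\<in>{y. b x y > 0}. of_real (b x y) * (ip (f x) (f x) - ip (\<Phi> x y *\<^sub>v f y) (f x)))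
    + ip (W x *\<^sub>v f x) (f x)"
proof -
  define Y where "Y = {y. b x y > 0}"
  have dM: "dim_vec (magnetic_op b d \<Phi> W f x) = d x" using Wc[of x] by (simp add: magnetic_op_def)
  have df: "dim_vec (f x) = d x" using fc[of x] by simp
  have dP: "dim_vec (\<Phi> x y *\<^sub>v f y) = d x" if "y \<in> Y" for y using Phic[of x y] that by (simp add: Y_def)
  have dW: "dim_vec (W x *\<^sub>v f x) = d x" using Wc[of x] by simp
  have dWr: "dim_row (W x) = d x" using Wc[of x] by simp
  have "ip (magnetic_op b d \<Phi> W f x) (f x) = (\<Sum>i<d x.
     ((\<Sum>y\<in>Y. of_real (b x y) * (f x $ i - (\<Phi> x y *\<^sub>v f y) $ i)) + (W x *\<^sub>v f x) $ i) * cnj (f x $ i))"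
    unfolding ip_def dM by (intro sum.cong refl) (simp add: magnetic_op_def Y_def dW dWr)
  also have "\<dots> = (\<Sum>y\<in>Y. of_real (b x y) * ((\<Sum>i<d x. f x $ i * cnj (f x $ i))
       - (\<Sum>i<d x. (\<Phi> x y *\<^sub>v f y) $ i * cnj (f x $ i)))) + (\<Sum>i<d x. (W x *\<^sub>v f x) $ i * cnj (f x $ i))"
    by (simp add: sum.distrib sum_distrib_right sum_distrib_left sum_subtractf ring_distribs mult.assoc sum.swap[of _ "{..<d x}"])
  also have "\<dots> = (\<Sum>y\<in>Y. of_real (b x y) * (ip (f x) (f x) - ip (\<Phi> x y *\<^sub>v f y) (f x)))
    + ip (W x *\<^sub>v f x) (f x)"
    unfolding ip_def df dW using dP by (intro arg_cong2[where f="(+)"] sum.cong refl) auto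
  finally show ?thesis by (simp add: Y_def)
qed


lemma ip_zero: "ip (0\<^sub>v n) v = 0" by (simp add: ip_def)

lemma nsq_zero: assumes "v \<in> carrier_vec n" "nsq v = 0" shows "v = 0\<^sub>v n"
proof (rule eq_vecI)
  fix i assume "i < dim_vec (0\<^sub>v n)"
  then have i: "i < dim_vec v" using assms by simp
  have "(cmod (v $ i))\<^sup>2 = 0" using assms(2) i unfolding nsq_def
    by (subst (asm) sum_nonneg_eq_0_iff) auto
  then show "v $ i = 0\<^sub>v n $ i" using i assms by simp
qed (use assms in simp)

lemma GS:
  assumes inf: "\<And>x. infinite (component b x)"
    and qc: "qform_nonneg b (Wmin W) \<or> qform_nonneg b (\<lambda>x. - Wmax W x - 2 * deg b x)"
    and fc: "\<And>x. f x \<in> carrier_vec (d x)" and fin: "finite {x. f x \<noteq> 0\<^sub>v (d x)}"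
    and M0: "\<And>x. magnetic_op b d \<Phi> W f x = 0\<^sub>v (d x)"
  shows "f x = 0\<^sub>v (d x)"
proof (rule ccontr)
  assume nz: "f x \<noteq> 0\<^sub>v (d x)"
  define S where "S = {x. f x \<noteq> 0\<^sub>v (d x)}"
  have fS: "finite S" using fin by (simp add: S_def)
  have xS: "x \<in> S" using nz by (simp add: S_def)
  obtain y0 z where yz: "y0 \<in> S" "z \<notin> S" "b y0 z > 0" using edge_out[OF fS xS inf] by blast
  define u where "u y = sqrt (nsq (f y))" for y
  have unn: "u y \<ge> 0" for y by (simp add: u_def nsq_nonneg)
  have u2: "(u y)\<^sup>2 = nsq (f y)" for y by (simp add: u_def nsq_nonneg)
  have u0: "u y = 0" if "y \<notin> S" for y
    using that by (simp add: S_def u_def nsq_def)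
  have upos: "u y > 0" if "y \<in> S" for y
  proof -
    have "nsq (f y) \<noteq> 0" using nsq_zero[OF fc] that by (auto simp: S_def)
    then show ?thesis using unn[of y] u2[of y] by (metis less_eq_real_def power_zero_numeral)
  qed
  define Y where "Y y = {w. b y w > 0}" for y
  have ipPhi: "\<bar>Re (ip (\<Phi> y w *\<^sub>v f w) (f y))\<bar> \<le> u y * u w" if "b y w > 0" for y w
  proof -
    have dd: "dim_vec (\<Phi> y w *\<^sub>v f w) = dim_vec (f y)" using Phic[OF that] fc[of y] by simp
    have "\<bar>Re (ip (\<Phi> y w *\<^sub>v f w) (f y))\<bar> \<le> cmod (ip (\<Phi> y w *\<^sub>v f w) (f y))" by (rule abs_Re_le_cmod)
    also have "\<dots> \<le> sqrt (nsq (\<Phi> y w *\<^sub>v f w)) * sqrt (nsq (f y))" by (rule ip_CS[OF dd])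
    also have "nsq (\<Phi> y w *\<^sub>v f w) = nsq (f w)" by (rule unitary_nsq[OF Phic[OF that] Phiu[OF that] fc])
    finally show ?thesis by (simp add: u_def mult.commute)
  qed
  have eq0: "0 = (\<Sum>w\<in>Y y. b y w * ((u y)\<^sup>2 - Re (ip (\<Phi> y w *\<^sub>v f w) (f y)))) + Re (ip (W y *\<^sub>v f y) (f y))" for y
  proof -
    have "0 = Re (ip (magnetic_op b d \<Phi> W f y) (f y))" using M0[of y] by (simp add: ip_zero)
    also have "\<dots> = Re ((\<Sum>w\<in>Y y. of_real (b y w) * (ip (f y) (f y) - ip (\<Phi> y w *\<^sub>v f w) (f y)))
      + ip (W y *\<^sub>v f y) (f y))" using ipM[OF fc, of y] by (simp add: Y_def)
    also have "\<dots> = (\<Sum>w\<in>Y y. b y w * ((u y)\<^sup>2 - Re (ip (\<Phi> y w *\<^sub>v f w) (f y)))) + Re (ip (W y *\<^sub>v f y) (f y))"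
      by (simp add: Re_sum ip_self u2)
    finally show ?thesis .
  qed
  define V where "V = (if qform_nonneg b (Wmin W) then Wmin W else (\<lambda>x. - Wmax W x - 2 * deg b x))"
  have qV: "qform_nonneg b V" using qc by (auto simp: V_def)
  have per: "(\<Sum>w\<in>Y y. b y w * ((u y)\<^sup>2 - u y * u w)) + V y * (u y)\<^sup>2 \<le> 0" for y
  proof (cases "qform_nonneg b (Wmin W)")
    case True
    have Wb: "Wmin W y * (u y)\<^sup>2 \<le> Re (ip (W y *\<^sub>v f y) (f y))"
      using W_bounds(1)[OF Wc Wadj dpos fc, of y] u2 by (simp add: Wmin_def)
    have "(\<Sum>w\<in>Y y. b y w * ((u y)\<^sup>2 - u y * u w)) \<le> (\<Sum>w\<in>Y y. b y w * ((u y)\<^sup>2 - Re (ip (\<Phi> y w *\<^sub>v f w) (f y))))"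
    proof (rule sum_mono)
      fix w assume "w \<in> Y y"
      then have "Re (ip (\<Phi> y w *\<^sub>v f w) (f y)) \<le> u y * u w" using ipPhi[of y w] by (simp add: Y_def)
      then show "b y w * ((u y)\<^sup>2 - u y * u w) \<le> b y w * ((u y)\<^sup>2 - Re (ip (\<Phi> y w *\<^sub>v f w) (f y)))"
        by (intro mult_left_mono) (auto simp: bnn)
    qed
    then show ?thesis using eq0[of y] Wb True by (simp add: V_def)
  next
    case False
    have Wb: "Re (ip (W y *\<^sub>v f y) (f y)) \<le> Wmax W y * (u y)\<^sup>2"
      using W_bounds(2)[OF Wc Wadj dpos fc, of y] u2 by (simp add: Wmax_def)
    have "(\<Sum>w\<in>Y y. b y w * ((u y)\<^sup>2 - Re (ip (\<Phi> y w *\<^sub>v f w) (f y)))) \<le> (\<Sum>w\<in>Y y. b y w * ((u y)\<^sup>2 + u y * u w))"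
    proof (rule sum_mono)
      fix w assume "w \<in> Y y"
      then have "- Re (ip (\<Phi> y w *\<^sub>v f w) (f y)) \<le> u y * u w" using ipPhi[of y w] by (simp add: Y_def)
      then show "b y w * ((u y)\<^sup>2 - Re (ip (\<Phi> y w *\<^sub>v f w) (f y))) \<le> b y w * ((u y)\<^sup>2 + u y * u w)"
        by (intro mult_left_mono) (auto simp: bnn)
    qed
    then have A: "0 \<le> (\<Sum>w\<in>Y y. b y w * ((u y)\<^sup>2 + u y * u w)) + Wmax W y * (u y)\<^sup>2"
      using eq0[of y] Wb by linarith
    have dg: "2 * deg b y * (u y)\<^sup>2 = (\<Sum>w\<in>Y y. 2 * b y w * (u y)\<^sup>2)"
      unfolding deg_eq Y_def by (simp add: sum_distrib_left sum_distrib_right mult.assoc)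
    have "(\<Sum>w\<in>Y y. b y w * ((u y)\<^sup>2 - u y * u w)) + V y * (u y)\<^sup>2 =
       (\<Sum>w\<in>Y y. b y w * ((u y)\<^sup>2 - u y * u w)) - (\<Sum>w\<in>Y y. 2 * b y w * (u y)\<^sup>2) - Wmax W y * (u y)\<^sup>2"
      using False dg by (simp add: V_def algebra_simps)
    also have "\<dots> = - ((\<Sum>w\<in>Y y. b y w * ((u y)\<^sup>2 + u y * u w)) + Wmax W y * (u y)\<^sup>2)"
    proof -
      have "(\<Sum>w\<in>Y y. b y w * ((u y)\<^sup>2 - u y * u w)) - (\<Sum>w\<in>Y y. 2 * b y w * (u y)\<^sup>2)
         = (\<Sum>w\<in>Y y. b y w * ((u y)\<^sup>2 - u y * u w) - 2 * b y w * (u y)\<^sup>2)"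
        by (rule sum_subtractf[symmetric])
      also have "\<dots> = (\<Sum>w\<in>Y y. - (b y w * ((u y)\<^sup>2 + u y * u w)))"
        by (intro sum.cong refl) (simp add: algebra_simps)
      also have "\<dots> = - (\<Sum>w\<in>Y y. b y w * ((u y)\<^sup>2 + u y * u w))" by (rule sum_negf)
      finally show ?thesis by linarith
    qed
    finally show ?thesis using A by linarith
  qed
  define D where "D = S \<union> (\<Union>x\<in>S. {y. b x y > 0})"
  have fD: "finite D" using fS Yfin by (simp add: D_def)
  have "qform b V (\<lambda>x. of_real (u x)) = Fq D V u" by (rule qform_Fq[OF fS u0 D_def])
  also have "\<dots> = (\<Sum>x\<in>D. (\<Sum>y\<in>D. b x y * ((u x)\<^sup>2 - u x * u y)) + V x * (u x)\<^sup>2)" by (rule Fq_sym[OF fD])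
  also have "\<dots> = (\<Sum>x\<in>D. (\<Sum>y\<in>Y x. b x y * ((u x)\<^sup>2 - u x * u y)) + V x * (u x)\<^sup>2)"
  proof (rule sum.cong[OF refl])
    fix x assume "x \<in> D"
    have "(\<Sum>y\<in>D. b x y * ((u x)\<^sup>2 - u x * u y)) = (\<Sum>y\<in>Y x. b x y * ((u x)\<^sup>2 - u x * u y))"
    proof (cases "x \<in> S")
      case True
      have "Y x \<subseteq> D" using True by (auto simp: Y_def D_def)
      then show ?thesis using fD b0 by (intro sum.mono_neutral_left[symmetric]) (auto simp: Y_def)
    next
      case False
      then show ?thesis using u0[OF False] by simp
    qed
    then show "(\<Sum>y\<in>D. b x y * ((u x)\<^sup>2 - u x * u y)) + V x * (u x)\<^sup>2 =
      (\<Sum>y\<in>Y x. b x y * ((u x)\<^sup>2 - u x * u y)) + V x * (u x)\<^sup>2" by simp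
  qed
  also have "\<dots> \<le> 0" by (rule sum_nonpos) (rule per)
  finally have neg: "qform b V (\<lambda>x. of_real (u x)) \<le> 0" .
  show False using pert[OF qV fS u0 unn yz(2) yz(1) upos[OF yz(1)] _ neg] yz(3) bsym[of y0 z] by simp
qed

end

theorem theorem2p3:
  fixes b :: "'x::countable \<Rightarrow> 'x \<Rightarrow> real"
    and d :: "'x \<Rightarrow> nat"
    and \<Phi> :: "'x \<Rightarrow> 'x \<Rightarrow> complex mat"
    and W :: "'x \<Rightarrow> complex mat"
  assumes "weighted_graph b"
    and "\<And>x. d x > 0"
    and "connection b d \<Phi>"
    and "selfadjoint_endo d W"
    and "locally_finite b"
    and "\<And>x. infinite (component b x)"
    and "qform_nonneg b (Wmin W) \<or> qform_nonneg b (\<lambda>x. - Wmax W x - 2 * deg b x)"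
  shows "\<forall>g\<in>sections d. \<exists>f\<in>sections d. magnetic_op b d \<Phi> W f = g"
  proof -
  interpret mg b d \<Phi> W by unfold_locales (use assms in auto)
  have pad: "Lop (mco b d \<Phi> W) F (x,i) = F (x,i)" if "\<not> i < d x" for F x i
  proof -
    have "nb (mco b d \<Phi> W) (x,i) \<subseteq> {(x,i)}" using that by (auto simp: nb_def mco_simp split: if_splits)
    then have "Lop (mco b d \<Phi> W) F (x,i) = (\<Sum>q\<in>{(x,i)}. mco b d \<Phi> W (x,i) q * F q)"
      by (intro Lop_sum) auto
    then show ?thesis using that by (simp add: mco_simp)
  qed
  interpret H: hm "mco b d \<Phi> W"
  proof
    show "\<And>p. finite (nb (mco b d \<Phi> W) p)" by (rule mco_fin)
    show "\<And>p q. mco b d \<Phi> W q p = cnj (mco b d \<Phi> W p q)" by (rule mco_herm)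
  next
    fix F assume finF: "finite {p. F p \<noteq> 0}" and L0: "Lop (mco b d \<Phi> W) F = 0"
    define f where "f = secF d F"
    have fc: "f x \<in> carrier_vec (d x)" for x by (simp add: f_def secF_carrier)
    have M0: "magnetic_op b d \<Phi> W f x = 0\<^sub>v (d x)" for x
    proof (rule eq_vecI)
      fix i assume "i < dim_vec (0\<^sub>v (d x))"
      then have i: "i < d x" by simp
      show "magnetic_op b d \<Phi> W f x $ i = 0\<^sub>v (d x) $ i"
        using LopM[OF i, of F] L0 i by (simp add: f_def)
    qed (use Wc[of x] in \<open>simp add: magnetic_op_def\<close>)
    have "{x. f x \<noteq> 0\<^sub>v (d x)} \<subseteq> fst ` {p. F p \<noteq> 0}"
    proof
      fix x assume "x \<in> {x. f x \<noteq> 0\<^sub>v (d x)}"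
      then have "f x \<noteq> 0\<^sub>v (d x)" by simp
      then obtain i where "i < d x" "F (x,i) \<noteq> 0"
        by (metis (no_types, lifting) eq_vecI f_def index_vec index_zero_vec(1,2) secF_def dim_vec)
      then show "x \<in> fst ` {p. F p \<noteq> 0}" by force
    qed
    then have finf: "finite {x. f x \<noteq> 0\<^sub>v (d x)}" using finF by (meson finite_imageI finite_subset)
    have f0: "f x = 0\<^sub>v (d x)" for x by (rule GS[OF assms(6) assms(7) fc finf M0])
    show "F = 0"
    proof (rule ext)
      fix p :: "'x \<times> nat"
      obtain x i where p: "p = (x,i)" by (cases p)
      show "F p = 0 p"
      proof (cases "i < d x")
        case True
        then have "f x $ i = F (x,i)" by (simp add: f_def secF_index)
        then show ?thesis using f0[of x] True p by simp
      next
        case False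
        then show ?thesis using pad[OF False, of F] L0 p by (metis zero_fun_def)
      qed
    qed
  qed
  show ?thesis
  proof
    fix g assume g: "g \<in> sections d"
    define G where "G p = (if snd p < d (fst p) then g (fst p) $ snd p else 0)" for p
    obtain F where F: "Lop (mco b d \<Phi> W) F = G" using H.surj by blast
    define f where "f = secF d F"
    have "f \<in> sections d" by (simp add: sections_def f_def secF_carrier)
    moreover have "magnetic_op b d \<Phi> W f = g"
    proof
      fix x
      have gx: "g x \<in> carrier_vec (d x)" using g by (simp add: sections_def)
      show "magnetic_op b d \<Phi> W f x = g x"
      proof (rule eq_vecI)
        fix i assume "i < dim_vec (g x)"
        then have i: "i < d x" using gx by simp
        show "magnetic_op b d \<Phi> W f x $ i = g x $ i"
          using LopM[OF i, of F] F i by (simp add: f_def G_def)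
      qed (use Wc[of x] gx in \<open>simp add: magnetic_op_def\<close>)
    qed
    ultimately show "\<exists>f\<in>sections d. magnetic_op b d \<Phi> W f = g" by blast
  qed
qed


end
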